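(* Let $T=A+\mathrm iB$ and $S=U+\mathrm iV$, where $A,B,U,V$ are symmetric operators in $H$ (with $\operatorname{dom}(T)=\operatorname{dom}(A)\cap\operatorname{dom}(B)$, $\operatorname{dom}(S)=\operatorname{dom}(U)\cap\operatorname{dom}(V)$), and assume one of the following: (i) $A$ is selfadjoint and semibounded, and $U,V$ are $A$-compact; or (ii) $B$ is selfadjoint and semibounded, and $U,V$ are $B$-compact; or (iii) $A$ and $B$ are selfadjoint and semibounded, $U$ is $A$-compact and $V$ is $B$-compact. Then $W_e(T)=W_e(T+S)$.
   Context: $H$ is a separable infinite-dimensional complex Hilbert space. $W_e(T)=\{\lambda:\exists x_n\in\operatorname{dom}(T),\|x_n\|=1,x_n\stackrel{w}{\to}0,\langle Tx_n,x_n\rangle\to\lambda\}$. An operator $U$ is $A$-compact if $\operatorname{dom}(A)\subset\operatorname{dom}(U)$ and $U$ maps every sequence $(x_n)$ with $(x_n)$ and $(Ax_n)$ bounded to a sequence having a convergent subsequence. $T+S$ has domain $\operatorname{dom}(T)\cap\operatorname{dom}(S)$. *)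

theory Defs
  imports "HOL-Analysis.Analysis"
begin

text \<open>Concrete model of the separable infinite-dimensional complex Hilbert space H:
  the sequence space l2(N), vectors are functions nat => complex.\<close>

type_synonym vec = "nat \<Rightarrow> complex"
type_synonym op = "vec set \<times> (vec \<Rightarrow> vec)"

definition l2 :: "vec set" where
  "l2 = {x. summable (\<lambda>n. (cmod (x n))\<^sup>2)}"

definition vzero :: vec where "vzero = (\<lambda>n. 0)"
definition vadd :: "vec \<Rightarrow> vec \<Rightarrow> vec" where "vadd x y = (\<lambda>n. x n + y n)"
definition vsub :: "vec \<Rightarrow> vec \<Rightarrow> vec" where "vsub x y = (\<lambda>n. x n - y n)"
definition smul :: "complex \<Rightarrow> vec \<Rightarrow> vec" where "smul c x = (\<lambda>n. c * x n)"

text \<open>Inner product, linear in the first argument.\<close>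
definition ip :: "vec \<Rightarrow> vec \<Rightarrow> complex" where
  "ip x y = (\<Sum>n. x n * cnj (y n))"

definition vnorm :: "vec \<Rightarrow> real" where
  "vnorm x = sqrt (\<Sum>n. (cmod (x n))\<^sup>2)"

definition opdom :: "op \<Rightarrow> vec set" where "opdom T = fst T"
definition app :: "op \<Rightarrow> vec \<Rightarrow> vec" where "app T x = snd T x"

definition is_operator :: "op \<Rightarrow> bool" where
  "is_operator T \<longleftrightarrow> opdom T \<subseteq> l2 \<and> vzero \<in> opdom T \<and>
     (\<forall>x\<in>opdom T. \<forall>y\<in>opdom T. vadd x y \<in> opdom T \<and> app T (vadd x y) = vadd (app T x) (app T y)) \<and>
     (\<forall>c. \<forall>x\<in>opdom T. smul c x \<in> opdom T \<and> app T (smul c x) = smul c (app T x)) \<and>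
     app T ` opdom T \<subseteq> l2"

definition densely_defined :: "op \<Rightarrow> bool" where
  "densely_defined T \<longleftrightarrow> (\<forall>x\<in>l2. \<forall>e>0. \<exists>y\<in>opdom T. vnorm (vsub x y) < e)"

definition symmetric_op :: "op \<Rightarrow> bool" where
  "symmetric_op T \<longleftrightarrow> is_operator T \<and> densely_defined T \<and>
     (\<forall>x\<in>opdom T. \<forall>y\<in>opdom T. ip (app T x) y = ip x (app T y))"

definition adj_dom :: "op \<Rightarrow> vec set" where
  "adj_dom T = {y\<in>l2. \<exists>z\<in>l2. \<forall>x\<in>opdom T. ip (app T x) y = ip x z}"

text \<open>Selfadjoint: symmetric with dom(T*) = dom(T) (so T* = T by density).\<close>
definition selfadjoint_op :: "op \<Rightarrow> bool" where
  "selfadjoint_op T \<longleftrightarrow> symmetric_op T \<and> adj_dom T \<subseteq> opdom T"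

definition semibounded :: "op \<Rightarrow> bool" where
  "semibounded T \<longleftrightarrow> (\<exists>c::real.
      (\<forall>x\<in>opdom T. c * (vnorm x)\<^sup>2 \<le> Re (ip (app T x) x)) \<or>
      (\<forall>x\<in>opdom T. Re (ip (app T x) x) \<le> c * (vnorm x)\<^sup>2))"

definition bounded_seq :: "(nat \<Rightarrow> vec) \<Rightarrow> bool" where
  "bounded_seq x \<longleftrightarrow> (\<exists>M. \<forall>n. vnorm (x n) \<le> M)"

definition has_conv_subseq :: "(nat \<Rightarrow> vec) \<Rightarrow> bool" where
  "has_conv_subseq y \<longleftrightarrow> (\<exists>r L. strict_mono r \<and> L \<in> l2 \<and>
      (\<lambda>n. vnorm (vsub (y (r n)) L)) \<longlonglongrightarrow> 0)"

definition rel_compact :: "op \<Rightarrow> op \<Rightarrow> bool" where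
  "rel_compact U A \<longleftrightarrow> opdom A \<subseteq> opdom U \<and>
     (\<forall>x. (\<forall>n. x n \<in> opdom A) \<and> bounded_seq x \<and> bounded_seq (\<lambda>n. app A (x n))
          \<longrightarrow> has_conv_subseq (\<lambda>n. app U (x n)))"

definition op_re_im :: "op \<Rightarrow> op \<Rightarrow> op" where
  "op_re_im A B = (opdom A \<inter> opdom B, \<lambda>x. vadd (app A x) (smul \<i> (app B x)))"

definition op_plus :: "op \<Rightarrow> op \<Rightarrow> op" where
  "op_plus T S = (opdom T \<inter> opdom S, \<lambda>x. vadd (app T x) (app S x))"

definition weak_to_zero :: "(nat \<Rightarrow> vec) \<Rightarrow> bool" where
  "weak_to_zero x \<longleftrightarrow> (\<forall>y\<in>l2. (\<lambda>n. ip (x n) y) \<longlonglongrightarrow> 0)"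

definition ess_num_range :: "op \<Rightarrow> complex set" where
  "ess_num_range T = {l. \<exists>x. (\<forall>n. x n \<in> opdom T \<and> vnorm (x n) = 1) \<and> weak_to_zero x \<and>
      (\<lambda>n. ip (app T (x n)) (x n)) \<longlonglongrightarrow> l}"

end

theory Submission
  imports Defs
begin



lemma l2_iff: "x \<in> l2 \<longleftrightarrow> summable (\<lambda>n. (cmod (x n))\<^sup>2)"
  by (simp add: l2_def)

lemma cmod_mult_le_sq: "cmod (a * cnj b) \<le> (cmod a)\<^sup>2 + (cmod b)\<^sup>2"
proof -
  have "cmod (a * cnj b) = cmod a * cmod b" by (simp add: norm_mult)
  also have "\<dots> \<le> (cmod a)\<^sup>2 + (cmod b)\<^sup>2"
  proof -
    have "0 \<le> (cmod a - cmod b)\<^sup>2" by simp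
    hence "2 * (cmod a * cmod b) \<le> (cmod a)\<^sup>2 + (cmod b)\<^sup>2" by (simp add: power2_eq_square algebra_simps)
    moreover have "0 \<le> cmod a * cmod b" by simp
    ultimately show ?thesis by linarith
  qed
  finally show ?thesis .
qed

lemma summable_ip_norm:
  assumes "x \<in> l2" "y \<in> l2"
  shows "summable (\<lambda>n. cmod (x n * cnj (y n)))"
  apply (rule summable_comparison_test[where g="\<lambda>n. (cmod (x n))\<^sup>2 + (cmod (y n))\<^sup>2"])
  using assms by (auto simp: l2_def cmod_mult_le_sq intro!: summable_add)

lemma summable_ip:
  assumes "x \<in> l2" "y \<in> l2"
  shows "summable (\<lambda>n. x n * cnj (y n))"
  by (rule summable_norm_cancel[OF summable_ip_norm[OF assms]])

lemma l2_zero[simp]: "vzero \<in> l2"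
  by (simp add: l2_def vzero_def)

lemma sq_add_le: "(cmod (a + b))\<^sup>2 \<le> 2 * (cmod a)\<^sup>2 + 2 * (cmod b)\<^sup>2"
proof -
  have "cmod (a + b) \<le> cmod a + cmod b" by (rule norm_triangle_ineq)
  hence "(cmod (a + b))\<^sup>2 \<le> (cmod a + cmod b)\<^sup>2" by (simp add: power_mono)
  moreover have "0 \<le> (cmod a - cmod b)\<^sup>2" by simp
  ultimately show ?thesis by (simp add: power2_eq_square algebra_simps)
qed

lemma l2_add[simp]: "x \<in> l2 \<Longrightarrow> y \<in> l2 \<Longrightarrow> vadd x y \<in> l2"
  unfolding l2_def vadd_def
  apply (simp)
  apply (rule summable_comparison_test[where g="\<lambda>n. 2 * (cmod (x n))\<^sup>2 + 2 * (cmod (y n))\<^sup>2"])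
  apply (simp add: sq_add_le)
  by (auto intro!: summable_add summable_mult)

lemma l2_smul[simp]: "x \<in> l2 \<Longrightarrow> smul c x \<in> l2"
  unfolding l2_def smul_def
  by (simp add: norm_mult power_mult_distrib summable_mult)

lemma vsub_eq: "vsub x y = vadd x (smul (-1) y)"
  by (simp add: vsub_def vadd_def smul_def fun_eq_iff)

lemma l2_sub[simp]: "x \<in> l2 \<Longrightarrow> y \<in> l2 \<Longrightarrow> vsub x y \<in> l2"
  by (simp add: vsub_eq)

lemma ip_add_left: "x \<in> l2 \<Longrightarrow> y \<in> l2 \<Longrightarrow> z \<in> l2 \<Longrightarrow> ip (vadd x y) z = ip x z + ip y z"
  unfolding ip_def vadd_def
  by (simp add: distrib_right suminf_add[OF summable_ip summable_ip])

lemma ip_smul_left: "x \<in> l2 \<Longrightarrow> y \<in> l2 \<Longrightarrow> ip (smul c x) y = c * ip x y"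
  unfolding ip_def smul_def
  using suminf_mult[OF summable_ip, of x y c] by (simp add: mult.assoc)

lemma cnj_suminf: "summable f \<Longrightarrow> cnj (suminf f) = (\<Sum>n. cnj (f n))"
  by (metis sums_cnj summable_sums sums_unique)

lemma ip_cnj: "x \<in> l2 \<Longrightarrow> y \<in> l2 \<Longrightarrow> ip y x = cnj (ip x y)"
  unfolding ip_def
  by (simp add: cnj_suminf[OF summable_ip] mult.commute)

lemma ip_add_right: "x \<in> l2 \<Longrightarrow> y \<in> l2 \<Longrightarrow> z \<in> l2 \<Longrightarrow> ip z (vadd x y) = ip z x + ip z y"
  using ip_cnj[of "vadd x y" z] ip_cnj[of x z] ip_cnj[of y z] by (simp add: ip_add_left)

lemma ip_smul_right: "x \<in> l2 \<Longrightarrow> y \<in> l2 \<Longrightarrow> ip y (smul c x) = cnj c * ip y x"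
  using ip_cnj[of "smul c x" y] ip_cnj[of x y] by (simp add: ip_smul_left)

lemma ip_sub_left: "x \<in> l2 \<Longrightarrow> y \<in> l2 \<Longrightarrow> z \<in> l2 \<Longrightarrow> ip (vsub x y) z = ip x z - ip y z"
  by (simp add: vsub_eq ip_add_left ip_smul_left)

lemma ip_sub_right: "x \<in> l2 \<Longrightarrow> y \<in> l2 \<Longrightarrow> z \<in> l2 \<Longrightarrow> ip z (vsub x y) = ip z x - ip z y"
  by (simp add: vsub_eq ip_add_right ip_smul_right)

lemma ip_zero_left[simp]: "ip vzero y = 0"
  by (simp add: ip_def vzero_def)

lemma ip_zero_right[simp]: "ip y vzero = 0"
  by (simp add: ip_def vzero_def)

lemma vnorm_sq: "x \<in> l2 \<Longrightarrow> (vnorm x)\<^sup>2 = (\<Sum>n. (cmod (x n))\<^sup>2)"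
proof -
  assume "x \<in> l2"
  hence s: "summable (\<lambda>n. (cmod (x n))\<^sup>2)" by (simp add: l2_def)
  have "0 \<le> (\<Sum>n. (cmod (x n))\<^sup>2)" by (rule suminf_nonneg[OF s]) simp
  thus ?thesis by (simp add: vnorm_def)
qed

lemma vnorm_nonneg[simp]: "x \<in> l2 \<Longrightarrow> 0 \<le> vnorm x"
  unfolding vnorm_def l2_def by (simp add: suminf_nonneg)

lemma ip_self: "x \<in> l2 \<Longrightarrow> ip x x = complex_of_real ((vnorm x)\<^sup>2)"
proof -
  assume x: "x \<in> l2"
  have "ip x x = (\<Sum>n. complex_of_real ((cmod (x n))\<^sup>2))"
    unfolding ip_def by (rule arg_cong[where f=suminf], rule ext, rule complex_norm_square[symmetric])
  also have "\<dots> = complex_of_real (\<Sum>n. (cmod (x n))\<^sup>2)"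
    using x by (intro suminf_of_real[symmetric]) (simp add: l2_def)
  finally show ?thesis using vnorm_sq[OF x] by simp
qed

lemma Re_ip_self: "x \<in> l2 \<Longrightarrow> Re (ip x x) = (vnorm x)\<^sup>2"
  by (simp add: ip_self)

lemma vnorm_zero_imp: assumes x: "x \<in> l2" and "vnorm x = 0" shows "x = vzero"
proof -
  have s: "summable (\<lambda>n. (cmod (x n))\<^sup>2)" using x by (simp add: l2_def)
  have "(\<Sum>n. (cmod (x n))\<^sup>2) = 0" using vnorm_sq[OF x] assms(2) by simp
  hence "\<forall>n. (cmod (x n))\<^sup>2 = 0" using suminf_eq_zero_iff[OF s] by simp
  thus ?thesis by (simp add: vzero_def fun_eq_iff)
qed

lemma vnorm_vzero[simp]: "vnorm vzero = 0"
  by (simp add: vnorm_def vzero_def)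

lemma cs_alg:
  fixes p q :: real and b :: complex
  assumes H: "\<And>s. 0 \<le> p - 2 * Re (cnj s * b) + (cmod s)\<^sup>2 * q" and q: "0 \<le> q"
  shows "(cmod b)\<^sup>2 \<le> p * q"
proof (cases "q = 0")
  case True
  show ?thesis
  proof (rule ccontr)
    assume "\<not> ?thesis"
    hence b: "(cmod b)\<^sup>2 > 0" using True by simp
    define t where "t = (\<bar>p\<bar> + 1) / (2 * (cmod b)\<^sup>2)"
    have "0 \<le> p - 2 * Re (cnj (complex_of_real t * b) * b)" using H[of "complex_of_real t * b"] True by simp
    moreover have "Re (cnj (complex_of_real t * b) * b) = t * (cmod b)\<^sup>2"
      unfolding cmod_power2 by (simp add: power2_eq_square algebra_simps)
    moreover have "2 * (t * (cmod b)\<^sup>2) = \<bar>p\<bar> + 1" using b by (simp add: t_def)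
    ultimately show False by linarith
  qed
next
  case False
  hence qp: "q > 0" using q by simp
  define s where "s = b / complex_of_real q"
  have "cnj s * b = (b * cnj b) / complex_of_real q" by (simp add: s_def mult.commute)
  also have "\<dots> = complex_of_real ((cmod b)\<^sup>2 / q)" by (simp only: complex_norm_square[symmetric] of_real_divide)
  finally have "cnj s * b = complex_of_real ((cmod b)\<^sup>2 / q)" .
  hence "Re (cnj s * b) = (cmod b)\<^sup>2 / q" by simp
  moreover have "(cmod s)\<^sup>2 * q = (cmod b)\<^sup>2 / q"
    using qp by (simp add: s_def norm_divide power_divide power2_eq_square)
  ultimately have "0 \<le> p - (cmod b)\<^sup>2 / q" using H[of s] by simp
  thus ?thesis using qp by (simp add: field_simps)
qed

lemma ip_expand:
  assumes x: "x \<in> l2" and y: "y \<in> l2"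
  shows "Re (ip (vsub x (smul s y)) (vsub x (smul s y))) =
     Re (ip x x) - 2 * Re (cnj s * ip x y) + (cmod s)\<^sup>2 * Re (ip y y)"
proof -
  have sy: "smul s y \<in> l2" using y by simp
  have xs: "vsub x (smul s y) \<in> l2" using x y by simp
  have e0: "ip (vsub x (smul s y)) (vsub x (smul s y)) = ip x (vsub x (smul s y)) - ip (smul s y) (vsub x (smul s y))"
    by (rule ip_sub_left[OF x sy xs])
  have e1: "ip x (vsub x (smul s y)) = ip x x - cnj s * ip x y"
    using ip_sub_right[OF x sy x] ip_smul_right[OF y x] by simp
  have e2: "ip (smul s y) (vsub x (smul s y)) = s * cnj (ip x y) - s * (cnj s * ip y y)"
    using ip_smul_left[OF y xs] ip_sub_right[OF x sy y] ip_smul_right[OF y y] ip_cnj[OF x y] by (simp add: right_diff_distrib)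
  have e3: "Re (s * cnj (ip x y)) = Re (cnj s * ip x y)"
    by (simp add: algebra_simps)
  have e4: "Re (s * (cnj s * ip y y)) = (cmod s)\<^sup>2 * Re (ip y y)"
  proof -
    have "s * (cnj s * ip y y) = (s * cnj s) * ip y y" by (simp add: mult.assoc)
    also have "\<dots> = complex_of_real ((cmod s)\<^sup>2) * complex_of_real ((vnorm y)\<^sup>2)"
      by (simp only: complex_norm_square ip_self[OF y])
    finally show ?thesis by (simp only: ip_self[OF y] Re_complex_of_real of_real_mult[symmetric])
  qed
  show ?thesis unfolding e0 e1 e2 using e3 e4 by simp
qed

lemma cauchy_schwarz: assumes "x \<in> l2" "y \<in> l2" shows "cmod (ip x y) \<le> vnorm x * vnorm y"
proof -
  have "(cmod (ip x y))\<^sup>2 \<le> (vnorm x)\<^sup>2 * (vnorm y)\<^sup>2"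
  proof (rule cs_alg)
    fix s
    have "0 \<le> Re (ip (vsub x (smul s y)) (vsub x (smul s y)))"
      using assms by (simp add: Re_ip_self)
    thus "0 \<le> (vnorm x)\<^sup>2 - 2 * Re (cnj s * ip x y) + (cmod s)\<^sup>2 * (vnorm y)\<^sup>2"
      using ip_expand[OF assms, of s] assms by (simp add: Re_ip_self)
  qed simp
  hence "(cmod (ip x y))\<^sup>2 \<le> (vnorm x * vnorm y)\<^sup>2" by (simp add: power_mult_distrib)
  thus ?thesis by (rule power2_le_imp_le) (simp add: assms)
qed

lemma vnorm_add_sq: assumes "x \<in> l2" "y \<in> l2"
  shows "(vnorm (vadd x y))\<^sup>2 = (vnorm x)\<^sup>2 + 2 * Re (ip x y) + (vnorm y)\<^sup>2"
proof -
  have "ip (vadd x y) (vadd x y) = ip x x + ip x y + cnj (ip x y) + ip y y"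
    using assms by (simp add: ip_add_left ip_add_right ip_cnj[of x y])
  hence "Re (ip (vadd x y) (vadd x y)) = Re (ip x x) + 2 * Re (ip x y) + Re (ip y y)" by simp
  thus ?thesis using assms by (simp add: Re_ip_self)
qed

lemma vnorm_triangle: assumes "x \<in> l2" "y \<in> l2" shows "vnorm (vadd x y) \<le> vnorm x + vnorm y"
proof -
  have "Re (ip x y) \<le> vnorm x * vnorm y"
    using cauchy_schwarz[OF assms] complex_Re_le_cmod order_trans by blast
  hence "(vnorm (vadd x y))\<^sup>2 \<le> (vnorm x + vnorm y)\<^sup>2"
    using vnorm_add_sq[OF assms] by (simp add: power2_eq_square algebra_simps)
  thus ?thesis by (rule power2_le_imp_le) (simp add: assms)
qed

lemma vnorm_smul: assumes x: "x \<in> l2" shows "vnorm (smul c x) = cmod c * vnorm x"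
proof -
  have "(vnorm (smul c x))\<^sup>2 = Re (ip (smul c x) (smul c x))" using x by (simp add: Re_ip_self)
  also have "ip (smul c x) (smul c x) = c * (cnj c * ip x x)"
    using ip_smul_left[of x "smul c x" c] ip_smul_right[OF x x, of c] x by simp
  also have "\<dots> = complex_of_real ((cmod c)\<^sup>2) * complex_of_real ((vnorm x)\<^sup>2)"
    by (simp only: mult.assoc[symmetric] complex_norm_square ip_self[OF x])
  finally have "(vnorm (smul c x))\<^sup>2 = (cmod c * vnorm x)\<^sup>2"
    by (simp only: Re_complex_of_real of_real_mult[symmetric] power_mult_distrib)
  thus ?thesis using power2_eq_iff_nonneg[of "vnorm (smul c x)" "cmod c * vnorm x"] x by simp
qed

lemma vnorm_sub_sym: "vnorm (vsub x y) = vnorm (vsub y x)"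
proof -
  have "\<And>n. (cmod (x n - y n))\<^sup>2 = (cmod (y n - x n))\<^sup>2" by (simp add: norm_minus_commute)
  thus ?thesis by (simp add: vnorm_def vsub_def)
qed

lemma vsub_vadd_split: "vsub x z = vadd (vsub x y) (vsub y z)"
  by (simp add: vsub_def vadd_def fun_eq_iff)

lemma vnorm_sub_triangle: assumes "x \<in> l2" "y \<in> l2" "z \<in> l2"
  shows "vnorm (vsub x z) \<le> vnorm (vsub x y) + vnorm (vsub y z)"
  using vnorm_triangle[of "vsub x y" "vsub y z"] assms by (simp add: vsub_vadd_split[of x z y])

lemma vsub_self[simp]: "vsub x x = vzero"
  by (simp add: vsub_def vzero_def)

lemma vsub_zero[simp]: "vsub x vzero = x"
  by (simp add: vsub_def vzero_def)

lemma vnorm_vsub_eq0: "x \<in> l2 \<Longrightarrow> y \<in> l2 \<Longrightarrow> vnorm (vsub x y) = 0 \<Longrightarrow> x = y"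
proof -
  assume a: "x \<in> l2" "y \<in> l2" "vnorm (vsub x y) = 0"
  have "vsub x y = vzero" using vnorm_zero_imp[of "vsub x y"] a by simp
  thus ?thesis by (simp add: vsub_def vzero_def fun_eq_iff)
qed




lemma op_dom_l2: "is_operator T \<Longrightarrow> x \<in> opdom T \<Longrightarrow> x \<in> l2"
  by (auto simp: is_operator_def)

lemma op_app_l2: "is_operator T \<Longrightarrow> x \<in> opdom T \<Longrightarrow> app T x \<in> l2"
  by (auto simp: is_operator_def)

lemma op_add: "is_operator T \<Longrightarrow> x \<in> opdom T \<Longrightarrow> y \<in> opdom T \<Longrightarrow>
   vadd x y \<in> opdom T \<and> app T (vadd x y) = vadd (app T x) (app T y)"
  by (simp add: is_operator_def)

lemma op_smul: "is_operator T \<Longrightarrow> x \<in> opdom T \<Longrightarrow>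
   smul c x \<in> opdom T \<and> app T (smul c x) = smul c (app T x)"
  by (simp add: is_operator_def)

lemma op_sub: "is_operator T \<Longrightarrow> x \<in> opdom T \<Longrightarrow> y \<in> opdom T \<Longrightarrow>
   vsub x y \<in> opdom T \<and> app T (vsub x y) = vsub (app T x) (app T y)"
  using op_add[of T x "smul (-1) y"] op_smul[of T y "-1"] by (simp add: vsub_eq)

lemma smul_zero_vec: "smul 0 x = vzero"
  by (simp add: smul_def vzero_def)

lemma op_zero: "is_operator T \<Longrightarrow> vzero \<in> opdom T \<and> app T vzero = vzero"
  using op_smul[of T vzero 0] by (simp add: is_operator_def smul_zero_vec)

definition vconv :: "(nat \<Rightarrow> vec) \<Rightarrow> vec \<Rightarrow> bool" where
  "vconv x L \<longleftrightarrow> (\<lambda>n. vnorm (vsub (x n) L)) \<longlonglongrightarrow> 0"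

lemma coord_le_vnorm: assumes "v \<in> l2" shows "cmod (v n) \<le> vnorm v"
proof -
  have s: "summable (\<lambda>n. (cmod (v n))\<^sup>2)" using assms by (simp add: l2_def)
  have "(\<Sum>i\<in>{n}. (cmod (v i))\<^sup>2) \<le> (\<Sum>i. (cmod (v i))\<^sup>2)"
    by (rule sum_le_suminf[OF s]) auto
  hence "(cmod (v n))\<^sup>2 \<le> (vnorm v)\<^sup>2" using vnorm_sq[OF assms] by simp
  thus ?thesis by (rule power2_le_imp_le) (simp add: assms)
qed

lemma partial_le_vnorm: assumes "v \<in> l2" shows "(\<Sum>i<m. (cmod (v i))\<^sup>2) \<le> (vnorm v)\<^sup>2"
proof -
  have s: "summable (\<lambda>n. (cmod (v n))\<^sup>2)" using assms by (simp add: l2_def)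
  show ?thesis unfolding vnorm_sq[OF assms] by (rule sum_le_suminf[OF s]) auto
qed

lemma ip_conv_left:
  assumes "\<And>n. x n \<in> l2" "L \<in> l2" "y \<in> l2" "vconv x L"
  shows "(\<lambda>n. ip (x n) y) \<longlonglongrightarrow> ip L y"
proof (rule LIM_zero_cancel)
  have "(\<lambda>n. ip (x n) y - ip L y) \<longlonglongrightarrow> 0"
  proof (rule Lim_null_comparison)
    show "\<forall>\<^sub>F n in sequentially. norm (ip (x n) y - ip L y) \<le> vnorm (vsub (x n) L) * vnorm y"
      using assms cauchy_schwarz[of "vsub (x _) L" y] by (simp add: ip_sub_left[symmetric])
    show "(\<lambda>n. vnorm (vsub (x n) L) * vnorm y) \<longlonglongrightarrow> 0"
      using assms(4) unfolding vconv_def by (intro tendsto_mult_left_zero)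
  qed
  thus "(\<lambda>n. ip (x n) y - ip L y) \<longlonglongrightarrow> 0" .
qed

lemma ip_conv_right:
  assumes "\<And>n. x n \<in> l2" "L \<in> l2" "y \<in> l2" "vconv x L"
  shows "(\<lambda>n. ip y (x n)) \<longlonglongrightarrow> ip y L"
proof -
  have "(\<lambda>n. cnj (ip (x n) y)) \<longlonglongrightarrow> cnj (ip L y)"
    by (rule tendsto_cnj[OF ip_conv_left[OF assms]])
  thus ?thesis using assms by (simp add: ip_cnj[of _ y])
qed

lemma vnorm_le_sub: assumes "x \<in> l2" "L \<in> l2" shows "vnorm x \<le> vnorm (vsub x L) + vnorm L"
proof -
  have "x = vadd (vsub x L) L" by (simp add: vadd_def vsub_def)
  hence "vnorm x = vnorm (vadd (vsub x L) L)" by simp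
  also have "\<dots> \<le> vnorm (vsub x L) + vnorm L" using assms by (intro vnorm_triangle) simp_all
  finally show ?thesis .
qed

lemma vnorm_conv:
  assumes "\<And>n. x n \<in> l2" "L \<in> l2" "vconv x L"
  shows "(\<lambda>n. vnorm (x n)) \<longlonglongrightarrow> vnorm L"
proof (rule LIM_zero_cancel, rule Lim_null_comparison)
  show "\<forall>\<^sub>F n in sequentially. norm (vnorm (x n) - vnorm L) \<le> vnorm (vsub (x n) L)"
  proof (intro always_eventually allI)
    fix n
    have "vnorm (x n) \<le> vnorm (vsub (x n) L) + vnorm L" using assms vnorm_le_sub by simp
    moreover have "vnorm L \<le> vnorm (vsub L (x n)) + vnorm (x n)" using assms vnorm_le_sub by simp
    ultimately show "norm (vnorm (x n) - vnorm L) \<le> vnorm (vsub (x n) L)"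
      by (simp add: vnorm_sub_sym[of L]) 
  qed
  show "(\<lambda>n. vnorm (vsub (x n) L)) \<longlonglongrightarrow> 0" using assms(3) by (simp add: vconv_def)
qed

lemma strong_imp_weak:
  assumes "\<And>n. x n \<in> l2" "vconv x vzero"
  shows "weak_to_zero x"
  unfolding weak_to_zero_def
proof (intro ballI)
  fix y assume "y \<in> l2"
  from ip_conv_left[OF assms(1) l2_zero this assms(2)] show "(\<lambda>n. ip (x n) y) \<longlonglongrightarrow> 0" by simp
qed

lemma vconv_subseq: "vconv x L \<Longrightarrow> strict_mono r \<Longrightarrow> vconv (\<lambda>n. x (r n)) L"
  unfolding vconv_def using LIMSEQ_subseq_LIMSEQ[of "\<lambda>n. vnorm (vsub (x n) L)" 0 r] by (simp add: o_def)

lemma weak_subseq: "weak_to_zero x \<Longrightarrow> strict_mono r \<Longrightarrow> weak_to_zero (\<lambda>n. x (r n))"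
  unfolding weak_to_zero_def using LIMSEQ_subseq_LIMSEQ by (auto simp: o_def)

section \<open>Completeness\<close>

lemma l2_complete:
  assumes X: "\<And>k. x k \<in> l2"
    and C: "\<And>e. e > 0 \<Longrightarrow> \<exists>N. \<forall>j\<ge>N. \<forall>k\<ge>N. vnorm (vsub (x j) (x k)) < e"
  shows "\<exists>L\<in>l2. vconv x L"
proof -
  have cc: "Cauchy (\<lambda>k. x k n)" for n
  proof (rule metric_CauchyI)
    fix e :: real assume "e > 0"
    then obtain N where N: "\<forall>j\<ge>N. \<forall>k\<ge>N. vnorm (vsub (x j) (x k)) < e" using C[of e] by auto
    show "\<exists>M. \<forall>j\<ge>M. \<forall>k\<ge>M. dist (x j n) (x k n) < e"
    proof (intro exI allI impI)
      fix j k assume "N \<le> j" "N \<le> k"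
      hence "vnorm (vsub (x j) (x k)) < e" using N by simp
      moreover have "cmod (vsub (x j) (x k) n) \<le> vnorm (vsub (x j) (x k))"
        using X by (intro coord_le_vnorm) simp
      ultimately show "dist (x j n) (x k n) < e" by (simp add: dist_norm vsub_def)
    qed
  qed
  define L where "L n = lim (\<lambda>k. x k n)" for n
  have lim: "(\<lambda>k. x k n) \<longlonglongrightarrow> L n" for n
    unfolding L_def using cc[of n] by (simp add: Cauchy_convergent_iff convergent_LIMSEQ_iff)
  have main: "vsub (x j) L \<in> l2 \<and> vnorm (vsub (x j) L) \<le> e"
    if e: "e > 0" and j: "j \<ge> N" and N: "\<forall>j\<ge>N. \<forall>k\<ge>N. vnorm (vsub (x j) (x k)) < e" for e j N
  proof -
    have ps: "(\<Sum>i<m. (cmod (x j i - L i))\<^sup>2) \<le> e\<^sup>2" for m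
    proof -
      have t: "(\<lambda>k. \<Sum>i<m. (cmod (x j i - x k i))\<^sup>2) \<longlonglongrightarrow> (\<Sum>i<m. (cmod (x j i - L i))\<^sup>2)"
        by (intro tendsto_intros lim)
      show ?thesis
      proof (rule LIMSEQ_le_const2[OF t], intro exI allI impI)
        fix k assume "k \<ge> N"
        hence "vnorm (vsub (x j) (x k)) < e" using N j by simp
        hence "(vnorm (vsub (x j) (x k)))\<^sup>2 \<le> e\<^sup>2" using X
          by (intro power_mono) simp_all
        moreover have "(\<Sum>i<m. (cmod (vsub (x j) (x k) i))\<^sup>2) \<le> (vnorm (vsub (x j) (x k)))\<^sup>2"
          using X by (intro partial_le_vnorm) simp
        ultimately show "(\<Sum>i<m. (cmod (x j i - x k i))\<^sup>2) \<le> e\<^sup>2" by (simp add: vsub_def)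
      qed
    qed
    have sm: "summable (\<lambda>i. (cmod (x j i - L i))\<^sup>2)"
      by (rule summableI_nonneg_bounded[where x="e\<^sup>2"]) (simp_all add: ps)
    hence l: "vsub (x j) L \<in> l2" by (simp add: l2_def vsub_def)
    have "(vnorm (vsub (x j) L))\<^sup>2 \<le> e\<^sup>2"
      unfolding vnorm_sq[OF l] using suminf_le_const[OF sm ps] by (simp add: vsub_def)
    hence "vnorm (vsub (x j) L) \<le> e" by (rule power2_le_imp_le) (simp add: e less_imp_le)
    with l show ?thesis by simp
  qed
  obtain N1 where N1: "\<forall>j\<ge>N1. \<forall>k\<ge>N1. vnorm (vsub (x j) (x k)) < 1" using C[of 1] by auto
  have l1: "vsub (x N1) L \<in> l2" using main[where e=1 and j=N1 and N=N1] N1 by simp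
  have eqL: "vsub (x N1) (vsub (x N1) L) = L" by (simp add: vsub_def)
  have "vsub (x N1) (vsub (x N1) L) \<in> l2" using l1 X by simp
  hence Ll2: "L \<in> l2" by (simp only: eqL)
  have "vconv x L"
    unfolding vconv_def
  proof (rule LIMSEQ_I)
    fix r :: real assume r: "r > 0"
    obtain N where N: "\<forall>j\<ge>N. \<forall>k\<ge>N. vnorm (vsub (x j) (x k)) < r/2" using C[of "r/2"] r by auto
    show "\<exists>no. \<forall>n\<ge>no. norm (vnorm (vsub (x n) L) - 0) < r"
    proof (intro exI allI impI)
      fix n assume "n \<ge> N"
      hence "vnorm (vsub (x n) L) \<le> r/2" using main[where e="r/2" and j=n and N=N] N r by simp
      thus "norm (vnorm (vsub (x n) L) - 0) < r" using r X Ll2 by simp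
    qed
  qed
  from this Ll2 show ?thesis by (rule bexI)
qed

lemma dense_orth_zero:
  assumes op: "is_operator T" and d: "densely_defined T" and v: "v \<in> l2"
    and orth: "\<And>w. w \<in> opdom T \<Longrightarrow> ip w v = 0"
  shows "v = vzero"
proof (rule ccontr)
  assume ne: "v \<noteq> vzero"
  have pos: "vnorm v > 0" using vnorm_zero_imp[OF v] ne vnorm_nonneg[OF v] by fastforce
  obtain w where w: "w \<in> opdom T" "vnorm (vsub v w) < vnorm v"
    using d v pos unfolding densely_defined_def by blast
  have wl: "w \<in> l2" using op_dom_l2[OF op w(1)] .
  have "ip v v = ip (vsub v w) v + ip w v" using v wl by (simp add: ip_sub_left)
  hence "ip v v = ip (vsub v w) v" using orth[OF w(1)] by simp
  moreover have "cmod (ip v v) = (vnorm v)\<^sup>2" unfolding ip_self[OF v] norm_of_real by simp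
  ultimately have "(vnorm v)\<^sup>2 \<le> vnorm (vsub v w) * vnorm v"
    using cauchy_schwarz[of "vsub v w" v] v wl by simp
  moreover have "vnorm (vsub v w) * vnorm v < vnorm v * vnorm v"
    using w(2) pos by simp
  ultimately show False by (simp add: power2_eq_square)
qed

lemma subseq_principle:
  fixes f :: "nat \<Rightarrow> real"
  assumes H: "\<And>r::nat\<Rightarrow>nat. strict_mono r \<Longrightarrow> \<exists>r2::nat\<Rightarrow>nat. strict_mono r2 \<and> (\<lambda>n. f (r (r2 n))) \<longlonglongrightarrow> 0"
  shows "f \<longlonglongrightarrow> 0"
proof (rule ccontr)
  assume nc: "\<not> f \<longlonglongrightarrow> 0"
  have "\<exists>e>0. \<forall>N. \<exists>n\<ge>N. \<not> norm (f n) < e"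
  proof (rule ccontr)
    assume "\<not> (\<exists>e>0. \<forall>N. \<exists>n\<ge>N. \<not> norm (f n) < e)"
    hence "\<forall>e>0. \<exists>N. \<forall>n\<ge>N. norm (f n - 0) < e" by simp
    hence "f \<longlonglongrightarrow> 0" by (simp only: LIMSEQ_iff)
    with nc show False by contradiction
  qed
  then obtain e where e: "e > 0" and fr: "\<forall>N. \<exists>n\<ge>N. \<not> norm (f n) < e" by blast
  define S where "S = {n. \<not> norm (f n) < e}"
  have "infinite S" unfolding S_def infinite_nat_iff_unbounded_le using fr by simp
  from infinite_enumerate[OF this] obtain r :: "nat \<Rightarrow> nat" where r: "strict_mono r" "\<forall>n. r n \<in> S" by blast
  from H[OF r(1)] obtain r2 where r2: "strict_mono r2" "(\<lambda>n. f (r (r2 n))) \<longlonglongrightarrow> 0" by blast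
  from r2(2) e obtain N where "\<forall>n\<ge>N. norm (f (r (r2 n)) - 0) < e" by (simp only: LIMSEQ_iff) blast
  hence "norm (f (r (r2 N))) < e" by simp
  moreover have "r (r2 N) \<in> S" using r by simp
  ultimately show False by (simp add: S_def)
qed




lemma sym_op: "symmetric_op A \<Longrightarrow> is_operator A" by (simp add: symmetric_op_def)
lemma sym_dense: "symmetric_op A \<Longrightarrow> densely_defined A" by (simp add: symmetric_op_def)
lemma sym_ip: "symmetric_op A \<Longrightarrow> x \<in> opdom A \<Longrightarrow> y \<in> opdom A \<Longrightarrow> ip (app A x) y = ip x (app A y)"
  by (simp add: symmetric_op_def)
lemma sa_sym: "selfadjoint_op A \<Longrightarrow> symmetric_op A" by (simp add: selfadjoint_op_def)
lemma sa_op: "selfadjoint_op A \<Longrightarrow> is_operator A" by (simp add: selfadjoint_op_def symmetric_op_def)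
lemma sa_adj: "selfadjoint_op A \<Longrightarrow> y \<in> l2 \<Longrightarrow> z \<in> l2 \<Longrightarrow> (\<And>x. x \<in> opdom A \<Longrightarrow> ip (app A x) y = ip x z) \<Longrightarrow> y \<in> opdom A"
  unfolding selfadjoint_op_def adj_dom_def by blast

lemma cnj_eq_imp_real: "w = cnj w \<Longrightarrow> w = complex_of_real (Re w)"
proof -
  assume h: "w = cnj w"
  have "Im w = Im (cnj w)" using h by (rule arg_cong)
  hence "Im w = 0" by simp
  thus ?thesis by (simp add: complex_eq_iff)
qed

lemma sym_real: assumes A: "symmetric_op A" and x: "x \<in> opdom A"
  shows "ip (app A x) x = complex_of_real (Re (ip (app A x) x))"
proof -
  have xl: "x \<in> l2" and al: "app A x \<in> l2" using op_dom_l2 op_app_l2 sym_op[OF A] x by auto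
  have "ip (app A x) x = ip x (app A x)" using sym_ip[OF A x x] .
  also have "\<dots> = cnj (ip (app A x) x)" using ip_cnj[OF al xl] .
  finally show ?thesis by (rule cnj_eq_imp_real)
qed

lemma vnorm_sub_sq: assumes "x \<in> l2" "y \<in> l2"
  shows "(vnorm (vsub x y))\<^sup>2 = (vnorm x)\<^sup>2 - 2 * Re (ip x y) + (vnorm y)\<^sup>2"
proof -
  have "(vnorm (vsub x y))\<^sup>2 = (vnorm (vadd x (smul (-1) y)))\<^sup>2" by (simp add: vsub_eq)
  also have "\<dots> = (vnorm x)\<^sup>2 + 2 * Re (ip x (smul (-1) y)) + (vnorm (smul (-1) y))\<^sup>2"
    using assms by (intro vnorm_add_sq) simp_all
  also have "ip x (smul (-1) y) = - ip x y" using assms by (simp add: ip_smul_right)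
  also have "vnorm (smul (-1) y) = vnorm y" using assms by (simp add: vnorm_smul)
  finally show ?thesis by simp
qed

section \<open>Positive selfadjoint operators and affine modifications\<close>

definition posop :: "op \<Rightarrow> bool" where
  "posop A \<longleftrightarrow> selfadjoint_op A \<and> (\<forall>x\<in>opdom A. (vnorm x)\<^sup>2 \<le> Re (ip (app A x) x))"

definition affop :: "real \<Rightarrow> real \<Rightarrow> op \<Rightarrow> op" where
  "affop s c A = (opdom A, \<lambda>x. vadd (smul (complex_of_real s) (app A x)) (smul (complex_of_real c) x))"

lemma opdom_affop[simp]: "opdom (affop s c A) = opdom A"
  by (simp add: affop_def opdom_def)

lemma app_affop[simp]: "app (affop s c A) x = vadd (smul (complex_of_real s) (app A x)) (smul (complex_of_real c) x)"
  by (simp add: affop_def app_def)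

lemma affop_is_operator: assumes A: "is_operator A" shows "is_operator (affop s c A)"
proof -
  have h1: "opdom (affop s c A) \<subseteq> l2" using A by (auto simp: is_operator_def)
  have h2: "vzero \<in> opdom (affop s c A)" using A by (simp add: is_operator_def)
  have h3: "\<forall>x\<in>opdom (affop s c A). \<forall>y\<in>opdom (affop s c A). vadd x y \<in> opdom (affop s c A) \<and>
      app (affop s c A) (vadd x y) = vadd (app (affop s c A) x) (app (affop s c A) y)"
  proof (intro ballI)
    fix x y assume x: "x \<in> opdom (affop s c A)" and y: "y \<in> opdom (affop s c A)"
    from op_add[OF A, of x y] x y have e: "vadd x y \<in> opdom A" "app A (vadd x y) = vadd (app A x) (app A y)" by auto
    show "vadd x y \<in> opdom (affop s c A) \<and>
      app (affop s c A) (vadd x y) = vadd (app (affop s c A) x) (app (affop s c A) y)"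
      using e by (simp add: vadd_def smul_def fun_eq_iff algebra_simps)
  qed
  have h4: "\<forall>d. \<forall>x\<in>opdom (affop s c A). smul d x \<in> opdom (affop s c A) \<and>
      app (affop s c A) (smul d x) = smul d (app (affop s c A) x)"
  proof (intro allI ballI)
    fix d x assume x: "x \<in> opdom (affop s c A)"
    from op_smul[OF A, of x d] x have e: "smul d x \<in> opdom A" "app A (smul d x) = smul d (app A x)" by auto
    show "smul d x \<in> opdom (affop s c A) \<and> app (affop s c A) (smul d x) = smul d (app (affop s c A) x)"
      using e by (simp add: vadd_def smul_def fun_eq_iff algebra_simps)
  qed
  have h5: "app (affop s c A) ` opdom (affop s c A) \<subseteq> l2"
    using A by (auto simp: op_dom_l2 op_app_l2)
  show ?thesis unfolding is_operator_def by (intro conjI h1 h2 h3 h4 h5)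
qed

lemma affop_symmetric: assumes A: "symmetric_op A" shows "symmetric_op (affop s c A)"
proof -
  have op: "is_operator A" using sym_op[OF A] .
  have "ip (app (affop s c A) x) y = ip x (app (affop s c A) y)"
    if x: "x \<in> opdom A" and y: "y \<in> opdom A" for x y
  proof -
    have l: "x \<in> l2" "y \<in> l2" "app A x \<in> l2" "app A y \<in> l2"
      using op x y by (simp_all add: op_dom_l2 op_app_l2)
    have "ip (app (affop s c A) x) y = complex_of_real s * ip (app A x) y + complex_of_real c * ip x y"
      using l by (simp add: ip_add_left ip_smul_left)
    also have "\<dots> = complex_of_real s * ip x (app A y) + complex_of_real c * ip x y"
      using sym_ip[OF A x y] by simp
    also have "\<dots> = ip x (app (affop s c A) y)"
      using l by (simp add: ip_add_right ip_smul_right)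
    finally show ?thesis .
  qed
  thus ?thesis using affop_is_operator[OF op] A
    by (simp add: symmetric_op_def densely_defined_def)
qed

lemma affop_selfadjoint: assumes A: "selfadjoint_op A" and s: "s \<noteq> 0"
  shows "selfadjoint_op (affop s c A)"
proof -
  have As: "symmetric_op A" using sa_sym[OF A] .
  have op: "is_operator A" using sa_op[OF A] .
  have "y \<in> opdom A" if y: "y \<in> adj_dom (affop s c A)" for y
  proof -
    from y obtain z where yl: "y \<in> l2" and zl: "z \<in> l2" and
      H: "\<forall>x\<in>opdom A. ip (app (affop s c A) x) y = ip x z"
      unfolding adj_dom_def by auto
    define z' where "z' = smul (complex_of_real (1/s)) (vsub z (smul (complex_of_real c) y))"
    have z'l: "z' \<in> l2" using yl zl by (simp add: z'_def)
    show ?thesis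
    proof (rule sa_adj[OF A yl z'l])
      fix x assume x: "x \<in> opdom A"
      have l: "x \<in> l2" "app A x \<in> l2" using op x by (simp_all add: op_dom_l2 op_app_l2)
      have h1: "ip (vadd (smul (complex_of_real s) (app A x)) (smul (complex_of_real c) x)) y = ip x z"
        using H x by simp
      have h2: "ip (vadd (smul (complex_of_real s) (app A x)) (smul (complex_of_real c) x)) y
          = complex_of_real s * ip (app A x) y + complex_of_real c * ip x y"
        using l yl by (simp add: ip_add_left ip_smul_left)
      have "complex_of_real s * ip (app A x) y + complex_of_real c * ip x y = ip x z"
        using h1 h2 by simp
      hence "complex_of_real s * ip (app A x) y = ip x z - complex_of_real c * ip x y"
        by (simp add: algebra_simps)
      hence "ip (app A x) y = (ip x z - complex_of_real c * ip x y) / complex_of_real s"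
        using s by (simp add: field_simps)
      also have "\<dots> = ip x z'"
        using l yl zl s by (simp add: z'_def ip_smul_right ip_sub_right divide_inverse mult.commute)
      finally show "ip (app A x) y = ip x z'" .
    qed
  qed
  thus ?thesis using affop_symmetric[OF As] by (auto simp: selfadjoint_op_def)
qed

lemma re_affop: assumes "is_operator A" "x \<in> opdom A"
  shows "Re (ip (app (affop s c A) x) x) = s * Re (ip (app A x) x) + c * (vnorm x)\<^sup>2"
proof -
  have l: "x \<in> l2" "app A x \<in> l2" using assms by (simp_all add: op_dom_l2 op_app_l2)
  hence "ip (app (affop s c A) x) x = complex_of_real s * ip (app A x) x + complex_of_real c * ip x x"
    by (simp add: ip_add_left ip_smul_left)
  thus ?thesis using l by (simp add: Re_ip_self)
qed

lemma posop_affop_general: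
  assumes A: "selfadjoint_op A" and s: "s \<noteq> 0"
    and H: "\<And>x. x \<in> opdom A \<Longrightarrow> (vnorm x)\<^sup>2 \<le> s * Re (ip (app A x) x) + c * (vnorm x)\<^sup>2"
  shows "posop (affop s c A)"
  unfolding posop_def using affop_selfadjoint[OF A s] H re_affop[OF sa_op[OF A]] by simp

lemma posop_affop:
  assumes A: "posop A" and s: "s > 0" and c: "c \<ge> 0" and sc: "s + c \<ge> 1"
  shows "posop (affop s c A)"
proof (rule posop_affop_general)
  show "selfadjoint_op A" using A by (simp add: posop_def)
  show "s \<noteq> 0" using s by simp
  fix x assume x: "x \<in> opdom A"
  have "(vnorm x)\<^sup>2 \<le> Re (ip (app A x) x)" using A x by (simp add: posop_def)
  hence "s * (vnorm x)\<^sup>2 \<le> s * Re (ip (app A x) x)" using s by simp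
  moreover have "(vnorm x)\<^sup>2 \<le> (s + c) * (vnorm x)\<^sup>2" using sc by (simp add: mult_le_cancel_right1)
  ultimately show "(vnorm x)\<^sup>2 \<le> s * Re (ip (app A x) x) + c * (vnorm x)\<^sup>2"
    by (simp add: algebra_simps)
qed

lemma posop_sa: "posop A \<Longrightarrow> selfadjoint_op A" by (simp add: posop_def)
lemma posop_op: "posop A \<Longrightarrow> is_operator A" by (simp add: posop_def sa_op)
lemma posop_sym: "posop A \<Longrightarrow> symmetric_op A" by (simp add: posop_def sa_sym)
lemma posop_ge: "posop A \<Longrightarrow> x \<in> opdom A \<Longrightarrow> (vnorm x)\<^sup>2 \<le> Re (ip (app A x) x)"
  by (simp add: posop_def)
lemma posop_nonneg: "posop A \<Longrightarrow> x \<in> opdom A \<Longrightarrow> 0 \<le> Re (ip (app A x) x)"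
  using posop_ge[of A x] by (meson order_trans zero_le_power2)

lemma posop_norm_le: assumes A: "posop A" and x: "x \<in> opdom A"
  shows "vnorm x \<le> vnorm (app A x)"
proof -
  have l: "x \<in> l2" "app A x \<in> l2" using posop_op[OF A] x by (simp_all add: op_dom_l2 op_app_l2)
  have "(vnorm x)\<^sup>2 \<le> Re (ip (app A x) x)" using posop_ge[OF A x] .
  also have "\<dots> \<le> cmod (ip (app A x) x)" by (rule complex_Re_le_cmod)
  also have "\<dots> \<le> vnorm (app A x) * vnorm x" using cauchy_schwarz[OF l(2) l(1)] .
  finally have h: "vnorm x * vnorm x \<le> vnorm (app A x) * vnorm x" by (simp add: power2_eq_square)
  show ?thesis
  proof (cases "vnorm x = 0")
    case True thus ?thesis using l by simp
  next
    case False
    hence "vnorm x > 0" using l by (simp add: order_le_neq_trans)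
    thus ?thesis using h by (simp add: mult_le_cancel_right)
  qed
qed

section \<open>Closedness and surjectivity\<close>

lemma sa_closed:
  assumes A: "selfadjoint_op A" and x: "\<And>k. x k \<in> opdom A"
    and x0: "x0 \<in> l2" and y0: "y0 \<in> l2"
    and cx: "vconv x x0" and cy: "vconv (\<lambda>k. app A (x k)) y0"
  shows "x0 \<in> opdom A \<and> app A x0 = y0"
proof -
  have op: "is_operator A" using sa_op[OF A] .
  have As: "symmetric_op A" using sa_sym[OF A] .
  have xl: "\<And>k. x k \<in> l2" and axl: "\<And>k. app A (x k) \<in> l2" using op x by (simp_all add: op_dom_l2 op_app_l2)
  have key: "ip (app A w) x0 = ip w y0" if w: "w \<in> opdom A" for w
  proof -
    have wl: "w \<in> l2" "app A w \<in> l2" using op w by (simp_all add: op_dom_l2 op_app_l2)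
    have "(\<lambda>k. ip (app A w) (x k)) \<longlonglongrightarrow> ip (app A w) x0"
      by (rule ip_conv_right[OF xl x0 wl(2) cx])
    moreover have "(\<lambda>k. ip (app A w) (x k)) = (\<lambda>k. ip w (app A (x k)))"
      using sym_ip[OF As w x] by simp
    moreover have "(\<lambda>k. ip w (app A (x k))) \<longlonglongrightarrow> ip w y0"
      by (rule ip_conv_right[OF axl y0 wl(1) cy])
    ultimately show ?thesis using LIMSEQ_unique by metis
  qed
  have dom: "x0 \<in> opdom A" using sa_adj[OF A x0 y0 key] .
  have al: "app A x0 \<in> l2" using op dom by (simp add: op_app_l2)
  have "vsub (app A x0) y0 = vzero"
  proof (rule dense_orth_zero[OF op sym_dense[OF As]])
    show "vsub (app A x0) y0 \<in> l2" using al y0 by simp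
    fix w assume w: "w \<in> opdom A"
    have wl: "w \<in> l2" using op w by (simp add: op_dom_l2)
    have "ip w (app A x0) = ip (app A w) x0" using sym_ip[OF As w dom] by simp
    also have "\<dots> = ip w y0" using key[OF w] .
    finally show "ip w (vsub (app A x0) y0) = 0" using wl al y0 by (simp add: ip_sub_right)
  qed
  hence "app A x0 = y0" by (simp add: vsub_def vzero_def fun_eq_iff)
  with dom show ?thesis by simp
qed




lemma parallelogram: assumes "u \<in> l2" "v \<in> l2"
  shows "(vnorm (vsub u v))\<^sup>2 + (vnorm (vadd u v))\<^sup>2 = 2 * (vnorm u)\<^sup>2 + 2 * (vnorm v)\<^sup>2"
  using vnorm_sub_sq[OF assms] vnorm_add_sq[OF assms] by simp

lemma posop_surj:
  assumes A: "posop A" and y: "y \<in> l2"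
  shows "\<exists>x\<in>opdom A. app A x = y"
proof -
  have op: "is_operator A" using posop_op[OF A] .
  have As: "symmetric_op A" using posop_sym[OF A] .
  have sa: "selfadjoint_op A" using posop_sa[OF A] .
  have dl: "\<And>x. x \<in> opdom A \<Longrightarrow> x \<in> l2" using op by (simp add: op_dom_l2)
  have al: "\<And>x. x \<in> opdom A \<Longrightarrow> app A x \<in> l2" using op by (simp add: op_app_l2)
  define D where "D = (\<lambda>x. vnorm (vsub y (app A x))) ` opdom A"
  define d where "d = Inf D"
  have z: "vzero \<in> opdom A" using op_zero[OF op] by simp
  have Dne: "D \<noteq> {}" using z by (auto simp: D_def)
  have bdd: "bdd_below D"
    unfolding bdd_below_def D_def using y al by (intro exI[of _ 0]) auto
  have dle: "d \<le> vnorm (vsub y (app A x))" if "x \<in> opdom A" for x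
    unfolding d_def by (rule cInf_lower[OF _ bdd]) (simp add: D_def that)
  have d0: "0 \<le> d"
    unfolding d_def using y al by (intro cInf_greatest[OF Dne]) (auto simp: D_def)
  have ex: "\<forall>k. \<exists>x. x \<in> opdom A \<and> vnorm (vsub y (app A x)) < d + inverse (real (Suc k))"
  proof
    fix k
    have "Inf D < d + inverse (real (Suc k))" unfolding d_def by simp
    from cInf_lessD[OF Dne this] show "\<exists>x. x \<in> opdom A \<and> vnorm (vsub y (app A x)) < d + inverse (real (Suc k))"
      by (auto simp: D_def)
  qed
  from choice[OF ex] obtain xs where xs: "\<And>k. xs k \<in> opdom A"
    and xsb: "\<And>k. vnorm (vsub y (app A (xs k))) < d + inverse (real (Suc k))" by blast
  define a where "a k = vnorm (vsub y (app A (xs k)))" for k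
  have a1: "d \<le> a k" for k unfolding a_def using dle[OF xs] .
  have a2: "a k < d + inverse (real (Suc k))" for k unfolding a_def using xsb .
  have asq: "(a k)\<^sup>2 \<le> d\<^sup>2 + (2 * d + 1) * inverse (real (Suc k))" for k
  proof -
    define e where "e = inverse (real (Suc k))"
    have e0: "0 < e" "e \<le> 1" by (simp_all add: e_def inverse_le_1_iff)
    have "0 \<le> a k" using a1[of k] d0 by simp
    hence "(a k)\<^sup>2 \<le> (d + e)\<^sup>2" using a2[of k] by (intro power_mono) (simp_all add: e_def)
    also have "\<dots> = d\<^sup>2 + 2 * d * e + e * e" by (simp add: power2_eq_square algebra_simps)
    also have "e * e \<le> e" using e0 by (simp add: mult_le_cancel_left1)
    hence "d\<^sup>2 + 2 * d * e + e * e \<le> d\<^sup>2 + (2 * d + 1) * e" by (simp add: algebra_simps)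
    finally show ?thesis by (simp add: e_def)
  qed
  have para: "(vnorm (vsub (app A (xs j)) (app A (xs k))))\<^sup>2 \<le> 2 * (a j)\<^sup>2 + 2 * (a k)\<^sup>2 - 4 * d\<^sup>2" for j k
  proof -
    define u where "u = vsub y (app A (xs j))"
    define v where "v = vsub y (app A (xs k))"
    have ul: "u \<in> l2" and vl: "v \<in> l2" using y al xs by (simp_all add: u_def v_def)
    define m where "m = smul (1/2) (vadd (xs j) (xs k))"
    have md: "m \<in> opdom A" and am: "app A m = smul (1/2) (vadd (app A (xs j)) (app A (xs k)))"
      using op_add[OF op xs xs, of j k] op_smul[OF op, of "vadd (xs j) (xs k)" "1/2"] by (simp_all add: m_def)
    have "vadd u v = smul 2 (vsub y (app A m))"
      unfolding u_def v_def am by (simp add: vadd_def vsub_def smul_def fun_eq_iff algebra_simps)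
    hence "vnorm (vadd u v) = 2 * vnorm (vsub y (app A m))"
      using y al[OF md] by (simp add: vnorm_smul)
    hence "2 * d \<le> vnorm (vadd u v)" using dle[OF md] by simp
    hence "(2 * d)\<^sup>2 \<le> (vnorm (vadd u v))\<^sup>2" using d0 by (intro power_mono) simp_all
    moreover have "vsub u v = vsub (app A (xs k)) (app A (xs j))"
      by (simp add: u_def v_def vsub_def fun_eq_iff)
    moreover have "vnorm (vsub (app A (xs k)) (app A (xs j))) = vnorm (vsub (app A (xs j)) (app A (xs k)))"
      by (rule vnorm_sub_sym)
    ultimately show ?thesis using parallelogram[OF ul vl] unfolding a_def u_def v_def
      by (simp add: power_mult_distrib)
  qed
  have cauchyA: "\<exists>N. \<forall>j\<ge>N. \<forall>k\<ge>N. vnorm (vsub (app A (xs j)) (app A (xs k))) < e" if e: "e > 0" for e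
  proof -
    obtain N where N: "4 * (2 * d + 1) / e\<^sup>2 < real (Suc N)"
      using reals_Archimedean2[of "4 * (2 * d + 1) / e\<^sup>2"] by (metis less_Suc_eq of_nat_Suc less_trans lessI of_nat_less_iff)
    have e2: "e\<^sup>2 > 0" using e by simp
    have Nb: "4 * ((2 * d + 1) * inverse (real (Suc N))) < e\<^sup>2"
      using N e2 by (simp add: field_simps)
    show ?thesis
    proof (intro exI allI impI)
      fix j k assume j: "N \<le> j" and k: "N \<le> k"
      have ij: "inverse (real (Suc j)) \<le> inverse (real (Suc N))" using j by (simp add: le_imp_inverse_le)
      have ik: "inverse (real (Suc k)) \<le> inverse (real (Suc N))" using k by (simp add: le_imp_inverse_le)
      have c: "0 \<le> 2 * d + 1" using d0 by simp
      have "(vnorm (vsub (app A (xs j)) (app A (xs k))))\<^sup>2 \<le> 2 * ((2 * d + 1) * inverse (real (Suc j))) + 2 * ((2 * d + 1) * inverse (real (Suc k)))"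
        using para[of j k] asq[of j] asq[of k] by linarith
      also have "\<dots> \<le> 4 * ((2 * d + 1) * inverse (real (Suc N)))"
        using mult_left_mono[OF ij c] mult_left_mono[OF ik c] by linarith
      also have "\<dots> < e\<^sup>2" by (rule Nb)
      finally have "(vnorm (vsub (app A (xs j)) (app A (xs k))))\<^sup>2 < e\<^sup>2" .
      thus "vnorm (vsub (app A (xs j)) (app A (xs k))) < e"
        using e by (simp add: power_less_imp_less_base less_imp_le)
    qed
  qed
  have cauchyx: "\<exists>N. \<forall>j\<ge>N. \<forall>k\<ge>N. vnorm (vsub (xs j) (xs k)) < e" if e: "e > 0" for e
  proof -
    obtain N where N: "\<forall>j\<ge>N. \<forall>k\<ge>N. vnorm (vsub (app A (xs j)) (app A (xs k))) < e"
      using cauchyA[OF e] by blast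
    show ?thesis
    proof (intro exI allI impI)
      fix j k assume "N \<le> j" "N \<le> k"
      hence lt: "vnorm (vsub (app A (xs j)) (app A (xs k))) < e" using N by simp
      have s: "vsub (xs j) (xs k) \<in> opdom A" "app A (vsub (xs j) (xs k)) = vsub (app A (xs j)) (app A (xs k))"
        using op_sub[OF op xs xs, of j k] by simp_all
      have "vnorm (vsub (xs j) (xs k)) \<le> vnorm (app A (vsub (xs j) (xs k)))"
        by (rule posop_norm_le[OF A s(1)])
      thus "vnorm (vsub (xs j) (xs k)) < e" using lt s(2) by simp
    qed
  qed
  obtain x0 where x0: "x0 \<in> l2" "vconv xs x0"
    using l2_complete[of xs] cauchyx dl xs by blast
  obtain r0 where r0: "r0 \<in> l2" "vconv (\<lambda>k. app A (xs k)) r0"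
    using l2_complete[of "\<lambda>k. app A (xs k)"] cauchyA al xs by blast
  have cl: "x0 \<in> opdom A \<and> app A x0 = r0"
    by (rule sa_closed[OF sa xs x0(1) r0(1) x0(2) r0(2)])
  have x0d: "x0 \<in> opdom A" and ax0: "app A x0 = r0" using cl by auto
  define e where "e = vsub y r0"
  have el: "e \<in> l2" using y r0 by (simp add: e_def)
  have conv_a: "a \<longlonglongrightarrow> vnorm e"
  proof -
    have "vconv (\<lambda>k. vsub y (app A (xs k))) e"
    proof -
      have "\<And>k. vsub (vsub y (app A (xs k))) e = vsub r0 (app A (xs k))"
        by (simp add: e_def vsub_def fun_eq_iff)
      hence "\<And>k. vnorm (vsub (vsub y (app A (xs k))) e) = vnorm (vsub (app A (xs k)) r0)"
        by (simp add: vnorm_sub_sym)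
      thus ?thesis using r0(2) by (simp add: vconv_def)
    qed
    thus ?thesis unfolding a_def using vnorm_conv[of "\<lambda>k. vsub y (app A (xs k))" e] y al xs el by simp
  qed
  have conv_d: "a \<longlonglongrightarrow> d"
  proof (rule real_tendsto_sandwich[where f="\<lambda>k. d" and h="\<lambda>k. d + inverse (real (Suc k))"])
    show "\<forall>\<^sub>F n in sequentially. d \<le> a n" using a1 by simp
    show "\<forall>\<^sub>F n in sequentially. a n \<le> d + inverse (real (Suc n))" using a2 by (simp add: less_imp_le)
    show "(\<lambda>k. d) \<longlonglongrightarrow> d" by simp
    show "(\<lambda>k. d + inverse (real (Suc k))) \<longlonglongrightarrow> d"
      using tendsto_add[OF tendsto_const LIMSEQ_inverse_real_of_nat, of d] by simp
  qed
  have ed: "vnorm e = d" using LIMSEQ_unique[OF conv_a conv_d] .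
  have orth: "ip (app A w) e = 0" if w: "w \<in> opdom A" for w
  proof -
    have wl: "app A w \<in> l2" using al[OF w] .
    have "(cmod (ip e (app A w)))\<^sup>2 \<le> 0 * (vnorm (app A w))\<^sup>2"
    proof (rule cs_alg)
      fix s :: complex
      have md: "vadd x0 (smul s w) \<in> opdom A"
        and am: "app A (vadd x0 (smul s w)) = vadd r0 (smul s (app A w))"
        using op_add[OF op x0d, of "smul s w"] op_smul[OF op w, of s] ax0 by auto
      have "vsub y (app A (vadd x0 (smul s w))) = vsub e (smul s (app A w))"
        unfolding am by (simp add: e_def vsub_def vadd_def smul_def fun_eq_iff)
      hence "vnorm e \<le> vnorm (vsub e (smul s (app A w)))" using dle[OF md] ed by simp
      hence "(vnorm e)\<^sup>2 \<le> (vnorm (vsub e (smul s (app A w))))\<^sup>2" using el by (intro power_mono) simp_all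
      also have "\<dots> = Re (ip (vsub e (smul s (app A w))) (vsub e (smul s (app A w))))"
        using el wl by (simp add: Re_ip_self)
      also have "\<dots> = (vnorm e)\<^sup>2 - 2 * Re (cnj s * ip e (app A w)) + (cmod s)\<^sup>2 * (vnorm (app A w))\<^sup>2"
        using ip_expand[OF el wl, of s] el wl by (simp add: Re_ip_self)
      finally show "0 \<le> 0 - 2 * Re (cnj s * ip e (app A w)) + (cmod s)\<^sup>2 * (vnorm (app A w))\<^sup>2" by simp
    qed simp
    hence "ip e (app A w) = 0" by simp
    thus ?thesis using ip_cnj[OF el wl] by simp
  qed
  have ed2: "e \<in> opdom A"
    by (rule sa_adj[OF sa el l2_zero]) (simp add: orth)
  have "(vnorm e)\<^sup>2 \<le> Re (ip (app A e) e)" using posop_ge[OF A ed2] .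
  hence "vnorm e = 0" using orth[OF ed2] el by simp
  hence "e = vzero" using vnorm_zero_imp[OF el] by simp
  hence "app A x0 = y" using ax0 by (simp add: e_def vsub_def vzero_def fun_eq_iff)
  with x0d show ?thesis by blast
qed

definition ainv :: "op \<Rightarrow> vec \<Rightarrow> vec" where
  "ainv A y = (SOME x. x \<in> opdom A \<and> app A x = y)"

lemma ainv: assumes "posop A" "y \<in> l2" shows "ainv A y \<in> opdom A" "app A (ainv A y) = y"
proof -
  have "\<exists>x. x \<in> opdom A \<and> app A x = y" using posop_surj[OF assms] by blast
  hence "ainv A y \<in> opdom A \<and> app A (ainv A y) = y" unfolding ainv_def by (rule someI_ex)
  thus "ainv A y \<in> opdom A" "app A (ainv A y) = y" by auto
qed




declare norm_divide[simp]

lemma rc_dom: "rel_compact U A \<Longrightarrow> x \<in> opdom A \<Longrightarrow> x \<in> opdom U"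
  by (auto simp: rel_compact_def)

lemma rc_apply: "rel_compact U A \<Longrightarrow> (\<And>n. x n \<in> opdom A) \<Longrightarrow> bounded_seq x \<Longrightarrow>
   bounded_seq (\<lambda>n. app A (x n)) \<Longrightarrow> has_conv_subseq (\<lambda>n. app U (x n))"
  by (simp add: rel_compact_def)

lemma bounded_seq_subseq: "bounded_seq x \<Longrightarrow> bounded_seq (\<lambda>n. x (r n))"
  by (auto simp: bounded_seq_def)

lemma compact_weak_to_zero:
  assumes U: "symmetric_op U" and rc: "rel_compact U A"
    and w: "\<And>n. w n \<in> opdom A" and bw: "bounded_seq w" and bAw: "bounded_seq (\<lambda>n. app A (w n))"
    and wk: "weak_to_zero w"
  shows "(\<lambda>n. vnorm (app U (w n))) \<longlonglongrightarrow> 0"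
proof (rule subseq_principle)
  fix r :: "nat \<Rightarrow> nat" assume r: "strict_mono r"
  have opU: "is_operator U" using sym_op[OF U] .
  have wU: "\<And>n. w n \<in> opdom U" using rc_dom[OF rc w] .
  have wl: "\<And>n. w n \<in> l2" using op_dom_l2[OF opU wU] .
  have Uwl: "\<And>n. app U (w n) \<in> l2" using op_app_l2[OF opU wU] .
  have "has_conv_subseq (\<lambda>n. app U (w (r n)))"
    by (rule rc_apply[OF rc w bounded_seq_subseq[OF bw] bounded_seq_subseq[OF bAw]])
  then obtain r2 :: "nat \<Rightarrow> nat" and L where r2: "strict_mono r2" and Ll: "L \<in> l2"
    and cv: "(\<lambda>n. vnorm (vsub (app U (w (r (r2 n)))) L)) \<longlonglongrightarrow> 0"
    unfolding has_conv_subseq_def by blast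
  have cv': "vconv (\<lambda>n. app U (w (r (r2 n)))) L" using cv by (simp add: vconv_def)
  have L0: "L = vzero"
  proof (rule dense_orth_zero[OF opU sym_dense[OF U] Ll])
    fix v assume v: "v \<in> opdom U"
    have vl: "v \<in> l2" "app U v \<in> l2" using opU v by (simp_all add: op_dom_l2 op_app_l2)
    have t1: "(\<lambda>n. ip (app U (w (r (r2 n)))) v) \<longlonglongrightarrow> ip L v"
      by (rule ip_conv_left[OF Uwl Ll vl(1) cv'])
    have "(\<lambda>n. ip (w n) (app U v)) \<longlonglongrightarrow> 0" using wk vl(2) by (simp add: weak_to_zero_def)
    hence "(\<lambda>n. ip (w (r (r2 n))) (app U v)) \<longlonglongrightarrow> 0"
      using LIMSEQ_subseq_LIMSEQ[OF _ strict_mono_o[OF r r2]] by (simp add: o_def)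
    moreover have "(\<lambda>n. ip (w (r (r2 n))) (app U v)) = (\<lambda>n. ip (app U (w (r (r2 n)))) v)"
      using sym_ip[OF U wU v] by simp
    ultimately have "(\<lambda>n. ip (app U (w (r (r2 n)))) v) \<longlonglongrightarrow> 0" by simp
    hence "ip L v = 0" using LIMSEQ_unique[OF t1] by simp
    thus "ip v L = 0" using ip_cnj[OF Ll vl(1)] by simp
  qed
  have "(\<lambda>n. vnorm (app U (w (r (r2 n))))) \<longlonglongrightarrow> 0"
  proof (rule Lim_null_comparison)
    show "\<forall>\<^sub>F n in sequentially. norm (vnorm (app U (w (r (r2 n))))) \<le> vnorm (vsub (app U (w (r (r2 n)))) L)"
      using L0 Uwl by simp
    show "(\<lambda>n. vnorm (vsub (app U (w (r (r2 n)))) L)) \<longlonglongrightarrow> 0" by (rule cv)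
  qed
  thus "\<exists>r2::nat\<Rightarrow>nat. strict_mono r2 \<and> (\<lambda>n. vnorm (app U (w (r (r2 n))))) \<longlonglongrightarrow> 0"
    using r2 by blast
qed

lemma rel_bound_zero:
  assumes opA: "is_operator A" and U: "symmetric_op U" and rc: "rel_compact U A" and e: "e > 0"
  shows "\<exists>D. \<forall>x\<in>opdom A. vnorm (app U x) \<le> e * vnorm (app A x) + D * vnorm x"
proof (rule ccontr)
  assume "\<not> ?thesis"
  hence "\<forall>n::nat. \<exists>x. x \<in> opdom A \<and> vnorm (app U x) > e * vnorm (app A x) + real (Suc n) * vnorm x"
    by (metis not_le)
  from choice[OF this] obtain xs where xs: "\<And>n. xs n \<in> opdom A"
    and big: "\<And>n. vnorm (app U (xs n)) > e * vnorm (app A (xs n)) + real (Suc n) * vnorm (xs n)" by blast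
  have opU: "is_operator U" using sym_op[OF U] .
  have xU: "\<And>n. xs n \<in> opdom U" using rc_dom[OF rc xs] .
  have xl: "\<And>n. xs n \<in> l2" and axl: "\<And>n. app A (xs n) \<in> l2" and uxl: "\<And>n. app U (xs n) \<in> l2"
    using opA opU xs xU by (simp_all add: op_dom_l2 op_app_l2)
  define c where "c n = vnorm (app U (xs n))" for n
  have cpos: "c n > 0" for n
  proof -
    have "0 \<le> e * vnorm (app A (xs n)) + real (Suc n) * vnorm (xs n)"
      using e xl axl by simp
    thus ?thesis using big[of n] by (simp add: c_def)
  qed
  define y where "y n = smul (complex_of_real (1 / c n)) (xs n)" for n
  have yA: "y n \<in> opdom A" "app A (y n) = smul (complex_of_real (1 / c n)) (app A (xs n))" for n
    using op_smul[OF opA xs] by (simp_all add: y_def)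
  have yU: "app U (y n) = smul (complex_of_real (1 / c n)) (app U (xs n))" for n
    using op_smul[OF opU xU] by (simp add: y_def)
  have nU: "vnorm (app U (y n)) = 1" for n
    using cpos[of n] uxl by (simp add: yU vnorm_smul c_def)
  have nA: "vnorm (app A (y n)) \<le> 1 / e" for n
  proof -
    have "0 \<le> real (Suc n) * vnorm (xs n)" using xl by simp
    hence "e * vnorm (app A (xs n)) < c n" using big[of n] unfolding c_def by linarith
    hence "vnorm (app A (xs n)) / c n \<le> 1 / e" using cpos[of n] e by (simp add: field_simps)
    thus ?thesis using cpos[of n] axl by (simp add: yA vnorm_smul)
  qed
  have ny: "vnorm (y n) \<le> inverse (real (Suc n))" for n
  proof -
    have "0 \<le> e * vnorm (app A (xs n))" using axl e by simp
    hence "real (Suc n) * vnorm (xs n) < c n" using big[of n] unfolding c_def by linarith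
    hence "vnorm (xs n) / c n \<le> inverse (real (Suc n))" using cpos[of n] by (simp add: field_simps)
    thus ?thesis using cpos[of n] xl by (simp add: y_def vnorm_smul)
  qed
  have yl: "\<And>n. y n \<in> l2" using xl by (simp add: y_def)
  have by1: "bounded_seq y"
    unfolding bounded_seq_def
  proof (intro exI[of _ 1] allI)
    fix n show "vnorm (y n) \<le> 1" using ny[of n] by (rule order_trans) (simp add: inverse_le_1_iff)
  qed
  have by2: "bounded_seq (\<lambda>n. app A (y n))" unfolding bounded_seq_def using nA by blast
  have cz: "vconv y vzero"
    unfolding vconv_def
  proof (rule real_tendsto_sandwich[where f="\<lambda>n. 0" and h="\<lambda>n. inverse (real (Suc n))"])
    show "\<forall>\<^sub>F n in sequentially. 0 \<le> vnorm (vsub (y n) vzero)" using yl by simp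
    show "\<forall>\<^sub>F n in sequentially. vnorm (vsub (y n) vzero) \<le> inverse (real (Suc n))" using ny by simp
    show "(\<lambda>n. inverse (real (Suc n))) \<longlonglongrightarrow> 0" by (rule LIMSEQ_inverse_real_of_nat)
  qed simp
  have wk: "weak_to_zero y" by (rule strong_imp_weak[OF yl cz])
  have "(\<lambda>n. vnorm (app U (y n))) \<longlonglongrightarrow> 0"
    by (rule compact_weak_to_zero[OF U rc yA(1) by1 by2 wk])
  hence "(\<lambda>n. 1::real) \<longlonglongrightarrow> 0" using nU by simp
  hence "(0::real) = 1" using LIMSEQ_unique[OF _ tendsto_const[of "1::real"]] by blast
  thus False by simp
qed




lemma ip_expand2:
  assumes "a \<in> l2" "b \<in> l2" "c \<in> l2" "d \<in> l2"
  shows "ip (vsub a (smul s b)) (vsub c (smul s d)) = ip a c - cnj s * ip a d - s * ip b c + s * (cnj s * ip b d)"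
proof -
  have e1: "ip (vsub a (smul s b)) (vsub c (smul s d)) = ip a (vsub c (smul s d)) - ip (smul s b) (vsub c (smul s d))"
    using assms by (simp add: ip_sub_left)
  have e2: "ip a (vsub c (smul s d)) = ip a c - cnj s * ip a d" using assms by (simp add: ip_sub_right ip_smul_right)
  have e3: "ip (smul s b) (vsub c (smul s d)) = s * (ip b c - cnj s * ip b d)"
    using assms by (simp add: ip_smul_left ip_sub_right ip_smul_right right_diff_distrib mult.left_commute)
  show ?thesis unfolding e1 e2 e3 by (simp add: algebra_simps)
qed

lemma cs_form:
  assumes A: "posop A" and a: "a \<in> opdom A" and b: "b \<in> opdom A"
  shows "(cmod (ip a (app A b)))\<^sup>2 \<le> Re (ip (app A a) a) * Re (ip (app A b) b)"
proof (rule cs_alg)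
  have op: "is_operator A" using posop_op[OF A] .
  have As: "symmetric_op A" using posop_sym[OF A] .
  show "0 \<le> Re (ip (app A b) b)" using posop_nonneg[OF A b] .
  fix s :: complex
  have l: "a \<in> l2" "b \<in> l2" "app A a \<in> l2" "app A b \<in> l2" using op a b by (simp_all add: op_dom_l2 op_app_l2)
  have vd: "vsub a (smul s b) \<in> opdom A" and av: "app A (vsub a (smul s b)) = vsub (app A a) (smul s (app A b))"
    using op_sub[OF op a, of "smul s b"] op_smul[OF op b, of s] by simp_all
  have "0 \<le> Re (ip (app A (vsub a (smul s b))) (vsub a (smul s b)))" using posop_nonneg[OF A vd] .
  also have "ip (app A (vsub a (smul s b))) (vsub a (smul s b)) = ip (vsub a (smul s b)) (app A (vsub a (smul s b)))"
    using sym_ip[OF As vd vd] .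
  also have "\<dots> = ip a (app A a) - cnj s * ip a (app A b) - s * ip b (app A a) + s * (cnj s * ip b (app A b))"
    unfolding av by (rule ip_expand2[OF l(1) l(2) l(3) l(4)])
  also have "ip a (app A a) = ip (app A a) a" using sym_ip[OF As a a] by simp
  also have "ip b (app A a) = cnj (ip a (app A b))"
    using sym_ip[OF As b a] ip_cnj[OF l(1) l(4)] by simp
  also have "ip b (app A b) = complex_of_real (Re (ip (app A b) b))"
    using sym_ip[OF As b b] sym_real[OF As b] by simp
  finally have h: "0 \<le> Re (ip (app A a) a - cnj s * ip a (app A b) - s * cnj (ip a (app A b))
       + s * (cnj s * complex_of_real (Re (ip (app A b) b))))" .
  have r1: "Re (s * cnj (ip a (app A b))) = Re (cnj s * ip a (app A b))" by (simp add: algebra_simps)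
  have r2: "s * (cnj s * complex_of_real r) = complex_of_real ((cmod s)\<^sup>2 * r)" for r
    by (simp only: mult.assoc[symmetric] complex_norm_square[symmetric] of_real_mult)
  show "0 \<le> Re (ip (app A a) a) - 2 * Re (cnj s * ip a (app A b)) + (cmod s)\<^sup>2 * Re (ip (app A b) b)"
    using h r1 unfolding r2 by simp
qed

lemma cs_trick:
  assumes A: "posop A" and U: "symmetric_op U" and dom: "\<And>x. x \<in> opdom A \<Longrightarrow> x \<in> opdom U"
    and k: "k > 0" and bnd: "\<And>x. x \<in> opdom A \<Longrightarrow> vnorm (app U x) \<le> k * vnorm (app A x)"
    and x: "x \<in> opdom A"
  shows "cmod (ip (app U x) x) \<le> k * Re (ip (app A x) x)"
proof -
  have op: "is_operator A" using posop_op[OF A] .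
  have As: "symmetric_op A" using posop_sym[OF A] .
  have opU: "is_operator U" using sym_op[OF U] .
  have dl: "\<And>y. y \<in> opdom A \<Longrightarrow> y \<in> l2" using op by (simp add: op_dom_l2)
  have al: "\<And>y. y \<in> opdom A \<Longrightarrow> app A y \<in> l2" using op by (simp add: op_app_l2)
  have ul: "\<And>y. y \<in> opdom A \<Longrightarrow> app U y \<in> l2" using opU dom by (simp add: op_app_l2)
  define P where "P y = ainv A (app U y)" for y
  have Pd: "\<And>y. y \<in> opdom A \<Longrightarrow> P y \<in> opdom A" unfolding P_def using ainv(1)[OF A ul] .
  have AP: "\<And>y. y \<in> opdom A \<Longrightarrow> app A (P y) = app U y" unfolding P_def using ainv(2)[OF A ul] .
  have Pmd: "(P ^^ m) y \<in> opdom A" if "y \<in> opdom A" for m y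
    using that by (induction m) (simp_all add: Pd)
  define g where "g a b = ip a (app A b)" for a b
  have F1: "g (P a) b = g a (P b)" if a: "a \<in> opdom A" and b: "b \<in> opdom A" for a b
  proof -
    have "g (P a) b = ip (app A (P a)) b" unfolding g_def using sym_ip[OF As Pd[OF a] b] by simp
    also have "\<dots> = ip (app U a) b" using AP[OF a] by simp
    also have "\<dots> = ip a (app U b)" using sym_ip[OF U dom[OF a] dom[OF b]] .
    also have "\<dots> = g a (P b)" unfolding g_def using AP[OF b] by simp
    finally show ?thesis .
  qed
  have F2: "g ((P ^^ m) a) b = g a ((P ^^ m) b)" if a: "a \<in> opdom A" and b: "b \<in> opdom A" for m a b
    using b
  proof (induction m arbitrary: b)
    case 0 thus ?case by simp
  next
    case (Suc m)
    have "g ((P ^^ Suc m) a) b = g (P ((P ^^ m) a)) b" by simp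
    also have "\<dots> = g ((P ^^ m) a) (P b)" by (rule F1[OF Pmd[OF a] Suc.prems])
    also have "\<dots> = g a ((P ^^ m) (P b))" by (rule Suc.IH[OF Pd[OF Suc.prems]])
    also have "(P ^^ m) (P b) = (P ^^ Suc m) b" by (simp only: funpow_Suc_right comp_def)
    finally show ?case .
  qed
  have F3: "g ((P ^^ m) x) ((P ^^ m) x) = g ((P ^^ (m + m)) x) x" for m
  proof -
    have "g ((P ^^ m) ((P ^^ m) x)) x = g ((P ^^ m) x) ((P ^^ m) x)" by (rule F2[OF Pmd[OF x] x])
    moreover have "(P ^^ (m + m)) x = (P ^^ m) ((P ^^ m) x)" by (simp add: funpow_add)
    ultimately show ?thesis by simp
  qed
  have F4: "vnorm (app A ((P ^^ m) x)) \<le> k ^ m * vnorm (app A x)" for m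
  proof (induction m)
    case 0 thus ?case by simp
  next
    case (Suc m)
    have "vnorm (app A ((P ^^ Suc m) x)) = vnorm (app U ((P ^^ m) x))" using AP[OF Pmd[OF x]] by simp
    also have "\<dots> \<le> k * vnorm (app A ((P ^^ m) x))" by (rule bnd[OF Pmd[OF x]])
    also have "\<dots> \<le> k * (k ^ m * vnorm (app A x))" using Suc.IH k by (simp add: mult_left_mono)
    finally show ?case by simp
  qed
  have F5: "cmod (g ((P ^^ m) x) x) \<le> k ^ m * (vnorm (app A x))\<^sup>2" for m
  proof -
    have "cmod (g ((P ^^ m) x) x) \<le> vnorm ((P ^^ m) x) * vnorm (app A x)"
      unfolding g_def by (rule cauchy_schwarz[OF dl[OF Pmd[OF x]] al[OF x]])
    also have "\<dots> \<le> vnorm (app A ((P ^^ m) x)) * vnorm (app A x)"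
      using posop_norm_le[OF A Pmd[OF x]] al[OF x] by (simp add: mult_right_mono)
    also have "\<dots> \<le> (k ^ m * vnorm (app A x)) * vnorm (app A x)"
      using F4[of m] al[OF x] by (simp add: mult_right_mono)
    finally show ?thesis by (simp add: power2_eq_square mult.assoc)
  qed
  have gself: "g a a = ip (app A a) a" if "a \<in> opdom A" for a
    unfolding g_def using sym_ip[OF As that that] by simp
  have F6: "(cmod (g a b))\<^sup>2 \<le> Re (g a a) * Re (g b b)" if "a \<in> opdom A" "b \<in> opdom A" for a b
    unfolding gself[OF that(1)] gself[OF that(2)] unfolding g_def by (rule cs_form[OF A that])
  define p where "p = Re (ip (app A x) x)"
  have ip_eq: "ip (app U x) x = g (P x) x"
    unfolding g_def using AP[OF x] sym_ip[OF As Pd[OF x] x] by simp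
  show ?thesis
  proof (cases "vnorm x = 0")
    case True
    hence "x = vzero" using vnorm_zero_imp dl[OF x] by simp
    hence "app U x = vzero" using op_zero[OF opU] by simp
    thus ?thesis using posop_nonneg[OF A x] k by simp
  next
    case False
    have pge: "(vnorm x)\<^sup>2 \<le> p" unfolding p_def by (rule posop_ge[OF A x])
    have ppos: "p > 0" using False dl[OF x] pge by (smt (verit) vnorm_nonneg zero_less_power2)
    define a0 where "a0 = cmod (g (P x) x)"
    have a00: "0 \<le> a0" by (simp add: a0_def)
    have gxx: "Re (g x x) = p" unfolding p_def gself[OF x] ..
    have claim: "a0 ^ (2 ^ j) * p \<le> cmod (g ((P ^^ (2 ^ j)) x) x) * p ^ (2 ^ j)" for j
    proof (induction j)
      case 0 thus ?case by (simp add: a0_def)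
    next
      case (Suc j)
      define M where "M = (2::nat) ^ j"
      define G where "G = cmod (g ((P ^^ M) x) x)"
      have IH: "a0 ^ M * p \<le> G * p ^ M" using Suc.IH by (simp add: M_def G_def)
      have "G\<^sup>2 \<le> Re (g ((P ^^ M) x) ((P ^^ M) x)) * Re (g x x)"
        unfolding G_def by (rule F6[OF Pmd[OF x] x])
      also have "\<dots> = Re (g ((P ^^ (M + M)) x) x) * p" using F3 gxx by simp
      also have "\<dots> \<le> cmod (g ((P ^^ (M + M)) x) x) * p"
        using ppos by (simp add: complex_Re_le_cmod mult_right_mono)
      finally have G2: "G\<^sup>2 \<le> cmod (g ((P ^^ (M + M)) x) x) * p" .
      have "(a0 ^ M * p)\<^sup>2 \<le> (G * p ^ M)\<^sup>2"
        using IH a00 ppos by (intro power_mono) simp_all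
      also have "\<dots> = G\<^sup>2 * p ^ (M + M)" by (simp add: power_mult_distrib power_add power2_eq_square)
      also have "\<dots> \<le> cmod (g ((P ^^ (M + M)) x) x) * p * p ^ (M + M)"
        using G2 ppos by (simp add: mult_right_mono)
      finally have "a0 ^ (M + M) * p * p \<le> cmod (g ((P ^^ (M + M)) x) x) * p ^ (M + M) * p"
        by (simp add: power2_eq_square power_add algebra_simps)
      hence "a0 ^ (M + M) * p \<le> cmod (g ((P ^^ (M + M)) x) x) * p ^ (M + M)"
        using ppos by (simp add: mult_le_cancel_right)
      moreover have "(2::nat) ^ Suc j = M + M" by (simp add: M_def)
      ultimately show ?case by simp
    qed
    define C where "C = (vnorm (app A x))\<^sup>2 / p"
    have bndM: "a0 ^ (2 ^ j) \<le> k ^ (2 ^ j) * C * p ^ (2 ^ j)" for j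
    proof -
      have "a0 ^ (2 ^ j) * p \<le> k ^ (2 ^ j) * (vnorm (app A x))\<^sup>2 * p ^ (2 ^ j)"
        using claim[of j] F5[of "2 ^ j"] ppos by (smt (verit) mult_right_mono zero_le_power less_imp_le)
      thus ?thesis using ppos by (simp add: C_def pos_le_divide_eq field_simps)
    qed
    show ?thesis
    proof (rule ccontr)
      assume "\<not> ?thesis"
      hence gt: "a0 > k * p" using ip_eq by (simp add: a0_def p_def)
      define \<rho> where "\<rho> = a0 / (k * p)"
      have kp: "k * p > 0" using k ppos by simp
      have r1: "\<rho> > 1" using gt kp by (simp add: \<rho>_def)
      obtain n where n: "C < \<rho> ^ n" using real_arch_pow[OF r1] by blast
      have "\<rho> ^ n \<le> \<rho> ^ (2 ^ n)" using r1 by (intro power_increasing) (simp_all add: less_imp_le)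
      also have "\<rho> ^ (2 ^ n) = a0 ^ (2 ^ n) / (k ^ (2 ^ n) * p ^ (2 ^ n))"
        by (simp add: \<rho>_def power_divide power_mult_distrib)
      also have "\<dots> \<le> C" using bndM[of n] k ppos by (simp add: pos_divide_le_eq mult.commute mult.left_commute)
      finally show False using n by simp
    qed
  qed
qed




lemma smul_one[simp]: "smul 1 x = x" by (simp add: smul_def)

lemma form_bound:
  assumes A: "posop A" and U: "symmetric_op U" and rc: "rel_compact U A" and e: "e > 0"
  shows "\<exists>D. \<forall>x\<in>opdom A. cmod (ip (app U x) x) \<le> e * Re (ip (app A x) x) + D * (vnorm x)\<^sup>2"
proof -
  have op: "is_operator A" using posop_op[OF A] .
  have opU: "is_operator U" using sym_op[OF U] .
  obtain D0 where D0: "\<forall>x\<in>opdom A. vnorm (app U x) \<le> (e/2) * vnorm (app A x) + D0 * vnorm x"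
    using rel_bound_zero[OF op U rc, of "e/2"] e by auto
  define D1 where "D1 = max D0 0"
  define \<mu> where "\<mu> = 2 * D1 / e + 1"
  have D10: "0 \<le> D1" by (simp add: D1_def)
  have "0 \<le> 2 * D1 / e" using D10 e by simp
  hence mu0: "\<mu> > 0" by (simp add: \<mu>_def)
  have D1mu: "D1 \<le> (e/2) * \<mu>" using e by (simp add: \<mu>_def field_simps)
  define B where "B = affop 1 \<mu> A"
  have pB: "posop B" unfolding B_def by (rule posop_affop[OF A]) (use mu0 in simp_all)
  have domB: "opdom B = opdom A" by (simp add: B_def)
  have b1: "vnorm (app A x) \<le> vnorm (app B x) \<and> \<mu> * vnorm x \<le> vnorm (app B x)" if x: "x \<in> opdom A" for x
  proof -
    have l: "x \<in> l2" "app A x \<in> l2" using op x by (simp_all add: op_dom_l2 op_app_l2)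
    have aB: "app B x = vadd (app A x) (smul (complex_of_real \<mu>) x)" by (simp add: B_def)
    have "(vnorm (app B x))\<^sup>2 = (vnorm (app A x))\<^sup>2 + 2 * Re (ip (app A x) (smul (complex_of_real \<mu>) x)) + (vnorm (smul (complex_of_real \<mu>) x))\<^sup>2"
      unfolding aB using l by (intro vnorm_add_sq) simp_all
    also have "Re (ip (app A x) (smul (complex_of_real \<mu>) x)) = \<mu> * Re (ip (app A x) x)"
      using l by (simp add: ip_smul_right)
    also have "vnorm (smul (complex_of_real \<mu>) x) = \<mu> * vnorm x" using l mu0 by (simp add: vnorm_smul)
    finally have eq: "(vnorm (app B x))\<^sup>2 = (vnorm (app A x))\<^sup>2 + 2 * (\<mu> * Re (ip (app A x) x)) + (\<mu> * vnorm x)\<^sup>2" .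
    have nn: "0 \<le> \<mu> * Re (ip (app A x) x)" using posop_nonneg[OF A x] mu0 by simp
    have "(vnorm (app A x))\<^sup>2 \<le> (vnorm (app B x))\<^sup>2" using eq nn by simp
    hence r1: "vnorm (app A x) \<le> vnorm (app B x)" by (rule power2_le_imp_le) (simp add: B_def l)
    have "(\<mu> * vnorm x)\<^sup>2 \<le> (vnorm (app B x))\<^sup>2" using eq nn by simp
    hence r2: "\<mu> * vnorm x \<le> vnorm (app B x)" by (rule power2_le_imp_le) (simp add: B_def l)
    show ?thesis using r1 r2 by simp
  qed
  have bnd: "vnorm (app U x) \<le> e * vnorm (app B x)" if x: "x \<in> opdom B" for x
  proof -
    have xA: "x \<in> opdom A" using x domB by simp
    have l: "x \<in> l2" using op xA by (simp add: op_dom_l2)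
    have "vnorm (app U x) \<le> (e/2) * vnorm (app A x) + D0 * vnorm x" using D0 xA by blast
    also have "\<dots> \<le> (e/2) * vnorm (app A x) + D1 * vnorm x"
      using l by (simp add: D1_def mult_right_mono)
    also have "(e/2) * vnorm (app A x) \<le> (e/2) * vnorm (app B x)" using b1[OF xA] e by simp
    also have "D1 * vnorm x \<le> (e/2) * vnorm (app B x)"
    proof -
      have "D1 * vnorm x \<le> ((e/2) * \<mu>) * vnorm x" using mult_right_mono[OF D1mu vnorm_nonneg[OF l]] .
      also have "\<dots> = (e/2) * (\<mu> * vnorm x)" by simp
      also have "\<dots> \<le> (e/2) * vnorm (app B x)" using b1[OF xA] e by (simp add: mult_left_mono)
      finally show ?thesis .
    qed
    finally show ?thesis by simp
  qed
  have domU: "\<And>x. x \<in> opdom B \<Longrightarrow> x \<in> opdom U" using rc_dom[OF rc] domB by simp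
  show ?thesis
  proof (intro exI[of _ "e * \<mu>"] ballI)
    fix x assume x: "x \<in> opdom A"
    have xB: "x \<in> opdom B" using x domB by simp
    have "cmod (ip (app U x) x) \<le> e * Re (ip (app B x) x)"
      by (rule cs_trick[OF pB U domU e bnd xB])
    also have "Re (ip (app B x) x) = Re (ip (app A x) x) + \<mu> * (vnorm x)\<^sup>2"
      unfolding B_def using re_affop[OF op x, of 1 \<mu>] by simp
    finally show "cmod (ip (app U x) x) \<le> e * Re (ip (app A x) x) + e * \<mu> * (vnorm x)\<^sup>2"
      by (simp add: algebra_simps)
  qed
qed

lemma resolvent_decomp:
  assumes A: "posop A" and t: "t > 0" and x: "x \<in> opdom A"
  defines "w \<equiv> ainv (affop t 1 A) x"
  shows "w \<in> opdom A" and "vsub x w = smul (complex_of_real t) (app A w)" and "vnorm w \<le> vnorm x"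
    and "2 * t * (vnorm (app A w))\<^sup>2 \<le> Re (ip (app A x) x)"
    and "Re (ip (app A (vsub x w)) (vsub x w)) \<le> Re (ip (app A x) x)"
proof -
  have op: "is_operator A" using posop_op[OF A] .
  have As: "symmetric_op A" using posop_sym[OF A] .
  have R: "posop (affop t 1 A)" by (rule posop_affop[OF A t]) (use t in simp_all)
  have xl: "x \<in> l2" using op x by (simp add: op_dom_l2)
  have wd: "w \<in> opdom A" and Rw: "app (affop t 1 A) w = x"
    using ainv[OF R xl] by (simp_all add: w_def)
  show "w \<in> opdom A" by (rule wd)
  have wl: "w \<in> l2" "app A w \<in> l2" using op wd by (simp_all add: op_dom_l2 op_app_l2)
  have xw: "x = vadd (smul (complex_of_real t) (app A w)) w" using Rw by simp
  show zeq: "vsub x w = smul (complex_of_real t) (app A w)"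
    unfolding xw by (simp add: vsub_def vadd_def fun_eq_iff)
  have "ip x w = complex_of_real t * ip (app A w) w + ip w w"
    unfolding xw using wl by (simp add: ip_add_left ip_smul_left)
  hence "Re (ip x w) = t * Re (ip (app A w) w) + (vnorm w)\<^sup>2" using wl by (simp add: Re_ip_self)
  moreover have "0 \<le> t * Re (ip (app A w) w)" using posop_nonneg[OF A wd] t by simp
  moreover have "Re (ip x w) \<le> vnorm x * vnorm w"
    using cauchy_schwarz[OF xl wl(1)] complex_Re_le_cmod order_trans by blast
  ultimately have h: "vnorm w * vnorm w \<le> vnorm x * vnorm w" by (simp add: power2_eq_square)
  show "vnorm w \<le> vnorm x"
  proof (cases "vnorm w = 0")
    case True thus ?thesis using xl by simp
  next
    case False
    hence "vnorm w > 0" using wl by (simp add: order_le_neq_trans)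
    thus ?thesis using h by (simp add: mult_le_cancel_right)
  qed
  define z where "z = vsub x w"
  have zd: "z \<in> opdom A" and Az: "app A z = vsub (app A x) (app A w)" using op_sub[OF op x wd] by (simp_all add: z_def)
  have zl: "z \<in> l2" "app A z \<in> l2" using op zd by (simp_all add: op_dom_l2 op_app_l2)
  have zt: "z = smul (complex_of_real t) (app A w)" using zeq by (simp add: z_def)
  have xwz: "x = vadd w z" by (simp add: z_def vadd_def vsub_def)
  have Ax: "app A x = vadd (app A w) (app A z)" using Az by (simp add: vadd_def vsub_def fun_eq_iff)
  have "ip (app A x) x = ip (app A w) w + ip (app A w) z + ip (app A z) w + ip (app A z) z"
    unfolding Ax using wl zl xwz by (simp add: ip_add_left ip_add_right)
  also have "ip (app A w) z = complex_of_real (t * (vnorm (app A w))\<^sup>2)"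
    unfolding zt using wl by (simp add: ip_smul_right ip_self)
  also have "ip (app A z) w = complex_of_real (t * (vnorm (app A w))\<^sup>2)"
    using sym_ip[OF As zd wd] unfolding zt using wl by (simp add: ip_smul_left ip_self)
  finally have "Re (ip (app A x) x) = Re (ip (app A w) w) + 2 * t * (vnorm (app A w))\<^sup>2 + Re (ip (app A z) z)"
    by simp
  moreover have "0 \<le> Re (ip (app A w) w)" using posop_nonneg[OF A wd] .
  moreover have "0 \<le> Re (ip (app A z) z)" using posop_nonneg[OF A zd] .
  moreover have "0 \<le> 2 * t * (vnorm (app A w))\<^sup>2" using t by simp
  ultimately show "2 * t * (vnorm (app A w))\<^sup>2 \<le> Re (ip (app A x) x)"
    and "Re (ip (app A (vsub x w)) (vsub x w)) \<le> Re (ip (app A x) x)"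
    unfolding z_def[symmetric] by simp_all
qed




lemma le_sq_plus_one: "0 \<le> (a::real) \<Longrightarrow> a \<le> a\<^sup>2 + 1"
proof -
  assume a: "0 \<le> a"
  have "0 \<le> (a - 1)\<^sup>2" by simp
  hence "2 * a \<le> a\<^sup>2 + 1" by (simp add: power2_eq_square algebra_simps)
  thus ?thesis using a by linarith
qed

lemma cmod_sum4: "cmod (p1 + p2 + p3 + p4) \<le> cmod p1 + cmod p2 + cmod p3 + cmod p4"
  using norm_triangle_ineq[of "p1+p2+p3" p4] norm_triangle_ineq[of "p1+p2" p3] norm_triangle_ineq[of p1 p2]
  by linarith

lemma form_compact:
  assumes A: "posop A" and U: "symmetric_op U" and rc: "rel_compact U A"
    and x: "\<And>n. x n \<in> opdom A" and nx: "\<And>n. vnorm (x n) \<le> 1" and wk: "weak_to_zero x"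
    and M: "\<And>n. Re (ip (app A (x n)) (x n)) \<le> M"
  shows "(\<lambda>n. ip (app U (x n)) (x n)) \<longlonglongrightarrow> 0"
proof -
  have op: "is_operator A" using posop_op[OF A] .
  have opU: "is_operator U" using sym_op[OF U] .
  have xl: "\<And>n. x n \<in> l2" using op x by (simp add: op_dom_l2)
  have M0: "0 \<le> M" using posop_nonneg[OF A x[of 0]] M[of 0] by simp
  show ?thesis unfolding LIMSEQ_iff
  proof (intro allI impI)
    fix \<eta> :: real assume \<eta>: "0 < \<eta>"
    define \<epsilon> where "\<epsilon> = \<eta> / (4 * (M + 1))"
    have \<epsilon>0: "\<epsilon> > 0" using \<eta> M0 by (simp add: \<epsilon>_def)
    obtain D where D: "\<forall>z\<in>opdom A. cmod (ip (app U z) z) \<le> \<epsilon> * Re (ip (app A z) z) + D * (vnorm z)\<^sup>2"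
      using form_bound[OF A U rc \<epsilon>0] by blast
    define D1 where "D1 = max D 0"
    have D10: "0 \<le> D1" by (simp add: D1_def)
    define t where "t = \<eta> / (4 * (D1 + 1) * (M + 1))"
    have t0: "t > 0" using \<eta> M0 D10 by (simp add: t_def)
    define R where "R = affop t 1 A"
    have pR: "posop R" unfolding R_def by (rule posop_affop[OF A t0]) (use t0 in simp_all)
    define w where "w n = ainv R (x n)" for n
    have wd: "w n \<in> opdom A" for n using resolvent_decomp(1)[OF A t0 x] by (simp add: w_def R_def)
    have zt: "vsub (x n) (w n) = smul (complex_of_real t) (app A (w n))" for n
      using resolvent_decomp(2)[OF A t0 x] by (simp add: w_def R_def)
    have nw: "vnorm (w n) \<le> 1" for n
      using resolvent_decomp(3)[OF A t0 x, of n] nx[of n] by (simp add: w_def R_def)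
    have Aw: "2 * t * (vnorm (app A (w n)))\<^sup>2 \<le> M" for n
      using resolvent_decomp(4)[OF A t0 x, of n] M[of n] by (simp add: w_def R_def)
    have Az: "Re (ip (app A (vsub (x n) (w n))) (vsub (x n) (w n))) \<le> M" for n
      using resolvent_decomp(5)[OF A t0 x, of n] M[of n] by (simp add: w_def R_def)
    have wl: "w n \<in> l2" "app A (w n) \<in> l2" for n using op wd by (simp_all add: op_dom_l2 op_app_l2)
    have wU: "w n \<in> opdom U" for n using rc_dom[OF rc wd] .
    have Uwl: "app U (w n) \<in> l2" for n using opU wU by (simp add: op_app_l2)
    have wkw: "weak_to_zero w"
      unfolding weak_to_zero_def
    proof (intro ballI)
      fix y assume y: "y \<in> l2"
      have vd: "ainv R y \<in> opdom R" and Rv: "app R (ainv R y) = y" using ainv[OF pR y] by simp_all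
      have vl: "ainv R y \<in> l2" using posop_op[OF pR] vd by (simp add: op_dom_l2)
      have wR: "w n \<in> opdom R" for n using wd by (simp add: R_def)
      have Rw: "app R (w n) = x n" for n using ainv(2)[OF pR xl] by (simp add: w_def)
      have "ip (w n) y = ip (x n) (ainv R y)" for n
        using sym_ip[OF posop_sym[OF pR] wR[of n] vd] Rv Rw[of n] by simp
      moreover have "(\<lambda>n. ip (x n) (ainv R y)) \<longlonglongrightarrow> 0" using wk vl by (simp add: weak_to_zero_def)
      ultimately show "(\<lambda>n. ip (w n) y) \<longlonglongrightarrow> 0" by simp
    qed
    have bw: "bounded_seq w" unfolding bounded_seq_def using nw by blast
    have bAw: "bounded_seq (\<lambda>n. app A (w n))"
      unfolding bounded_seq_def
    proof (intro exI allI)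
      fix n
      have "(vnorm (app A (w n)))\<^sup>2 \<le> M / (2 * t)" using Aw[of n] t0 by (simp add: pos_le_divide_eq mult.commute)
      thus "vnorm (app A (w n)) \<le> M / (2 * t) + 1" using le_sq_plus_one[of "vnorm (app A (w n))"] wl by simp
    qed
    have cU: "(\<lambda>n. vnorm (app U (w n))) \<longlonglongrightarrow> 0"
      by (rule compact_weak_to_zero[OF U rc wd bw bAw wkw])
    have e8: "\<eta> / 8 > 0" using \<eta> by simp
    obtain N where N: "\<forall>n\<ge>N. norm (vnorm (app U (w n)) - 0) < \<eta> / 8"
      using cU[unfolded LIMSEQ_iff, rule_format, OF e8] by blast
    show "\<exists>no. \<forall>n\<ge>no. norm (ip (app U (x n)) (x n) - 0) < \<eta>"
    proof (intro exI allI impI)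
      fix n assume nN: "N \<le> n"
      define a where "a = vnorm (app U (w n))"
      have "norm (vnorm (app U (w n)) - 0) < \<eta> / 8" using N nN by blast
      hence a8: "a < \<eta> / 8" using Uwl[of n] by (simp add: a_def)
      have a0: "0 \<le> a" using Uwl by (simp add: a_def)
      define z where "z = vsub (x n) (w n)"
      have zd: "z \<in> opdom A" and zl: "z \<in> l2" using op_sub[OF op x wd, of n n] op_dom_l2[OF op] by (simp_all add: z_def)
      have zU: "z \<in> opdom U" using rc_dom[OF rc zd] .
      have Uzl: "app U z \<in> l2" using opU zU by (simp add: op_app_l2)
      have nz: "vnorm z \<le> 2"
      proof -
        have "vnorm z \<le> vnorm (x n) + vnorm (smul (-1) (w n))"
          unfolding z_def vsub_eq using xl wl by (intro vnorm_triangle) simp_all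
        thus ?thesis using nx[of n] nw[of n] wl by (simp add: vnorm_smul)
      qed
      have xwz: "x n = vadd (w n) z" by (simp add: z_def vadd_def vsub_def)
      have Ux: "app U (x n) = vadd (app U (w n)) (app U z)"
        using op_add[OF opU wU zU] xwz by simp
      have dec: "ip (app U (x n)) (x n) = ip (app U (w n)) (w n) + ip (app U (w n)) z + ip z (app U (w n)) + ip (app U z) z"
      proof -
        have "ip (app U (x n)) (x n) = ip (app U (w n)) (w n) + ip (app U (w n)) z + ip (app U z) (w n) + ip (app U z) z"
          unfolding Ux using xwz wl Uwl zl Uzl by (simp add: ip_add_left ip_add_right)
        moreover have "ip (app U z) (w n) = ip z (app U (w n))" using sym_ip[OF U zU wU] .
        ultimately show ?thesis by simp
      qed
      have T1: "cmod (ip (app U (w n)) (w n)) \<le> a"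
      proof -
        have "cmod (ip (app U (w n)) (w n)) \<le> a * vnorm (w n)" unfolding a_def by (rule cauchy_schwarz[OF Uwl wl(1)])
        also have "\<dots> \<le> a * 1" using nw[of n] a0 by (intro mult_left_mono) simp_all
        finally show ?thesis by simp
      qed
      have T2: "cmod (ip (app U (w n)) z) \<le> 2 * a"
      proof -
        have "cmod (ip (app U (w n)) z) \<le> a * vnorm z" unfolding a_def by (rule cauchy_schwarz[OF Uwl zl])
        also have "\<dots> \<le> a * 2" using nz a0 by (intro mult_left_mono) simp_all
        finally show ?thesis by simp
      qed
      have T3: "cmod (ip z (app U (w n))) \<le> 2 * a"
      proof -
        have "cmod (ip z (app U (w n))) \<le> vnorm z * a" unfolding a_def by (rule cauchy_schwarz[OF zl Uwl])
        also have "\<dots> \<le> 2 * a" using nz a0 by (intro mult_right_mono) simp_all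
        finally show ?thesis .
      qed
      have T4: "cmod (ip (app U z) z) \<le> \<eta> / 4 + \<eta> / 8"
      proof -
        have "cmod (ip (app U z) z) \<le> \<epsilon> * Re (ip (app A z) z) + D * (vnorm z)\<^sup>2" using D zd by blast
        also have "\<epsilon> * Re (ip (app A z) z) \<le> \<epsilon> * M" using Az[of n] \<epsilon>0 by (simp add: z_def)
        also have "\<epsilon> * M \<le> \<eta> / 4"
        proof -
          have "\<epsilon> * M = (\<eta> / 4) * (M / (M + 1))" using M0 by (simp add: \<epsilon>_def field_simps)
          also have "\<dots> \<le> (\<eta> / 4) * 1" using M0 \<eta> by (intro mult_left_mono) simp_all
          finally show ?thesis by simp
        qed
        also have "D * (vnorm z)\<^sup>2 \<le> D1 * (vnorm z)\<^sup>2" by (intro mult_right_mono) (simp_all add: D1_def)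
        also have "D1 * (vnorm z)\<^sup>2 \<le> \<eta> / 8"
        proof -
          have "vnorm z = t * vnorm (app A (w n))" unfolding z_def zt using wl t0 by (simp add: vnorm_smul)
          hence "(vnorm z)\<^sup>2 = (t / 2) * (2 * t * (vnorm (app A (w n)))\<^sup>2)" by (simp add: power2_eq_square)
          also have "\<dots> \<le> (t / 2) * M" using Aw[of n] t0 by (intro mult_left_mono) simp_all
          finally have z2: "(vnorm z)\<^sup>2 \<le> (t / 2) * M" .
          have "D1 * (vnorm z)\<^sup>2 \<le> D1 * ((t / 2) * M)" using z2 D10 by (rule mult_left_mono)
          also have "\<dots> = (\<eta> / 8) * ((D1 * M) / ((D1 + 1) * (M + 1)))"
            using M0 D10 by (simp add: t_def field_simps)
          also have "\<dots> \<le> (\<eta> / 8) * 1"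
          proof (intro mult_left_mono)
            have "D1 * M \<le> (D1 + 1) * (M + 1)" using D10 M0 by (intro mult_mono) simp_all
            thus "D1 * M / ((D1 + 1) * (M + 1)) \<le> 1" using D10 M0 by (simp add: divide_le_eq_1)
          qed (use \<eta> in simp)
          finally show ?thesis by simp
        qed
        finally show ?thesis by simp
      qed
      have "cmod (ip (app U (x n)) (x n)) \<le> a + 2 * a + 2 * a + (\<eta> / 4 + \<eta> / 8)"
        unfolding dec using cmod_sum4 T1 T2 T3 T4 by (smt (verit))
      also have "\<dots> < \<eta>" using a8 by simp
      finally show "norm (ip (app U (x n)) (x n) - 0) < \<eta>" by simp
    qed
  qed
qed




lemma normalize_semibounded:
  assumes A: "selfadjoint_op A" and sb: "semibounded A"
  shows "\<exists>s c. \<bar>s\<bar> = 1 \<and> posop (affop s c A)"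
proof -
  obtain c where c: "(\<forall>x\<in>opdom A. c * (vnorm x)\<^sup>2 \<le> Re (ip (app A x) x)) \<or>
      (\<forall>x\<in>opdom A. Re (ip (app A x) x) \<le> c * (vnorm x)\<^sup>2)"
    using sb unfolding semibounded_def by blast
  thus ?thesis
  proof
    assume h: "\<forall>x\<in>opdom A. c * (vnorm x)\<^sup>2 \<le> Re (ip (app A x) x)"
    have "posop (affop 1 (1 - c) A)"
    proof (rule posop_affop_general[OF A])
      fix x assume "x \<in> opdom A"
      hence "c * (vnorm x)\<^sup>2 \<le> Re (ip (app A x) x)" using h by blast
      thus "(vnorm x)\<^sup>2 \<le> 1 * Re (ip (app A x) x) + (1 - c) * (vnorm x)\<^sup>2" by (simp add: algebra_simps)
    qed simp
    thus ?thesis by (intro exI[of _ 1] exI[of _ "1 - c"]) simp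
  next
    assume h: "\<forall>x\<in>opdom A. Re (ip (app A x) x) \<le> c * (vnorm x)\<^sup>2"
    have "posop (affop (-1) (1 + c) A)"
    proof (rule posop_affop_general[OF A])
      fix x assume "x \<in> opdom A"
      hence "Re (ip (app A x) x) \<le> c * (vnorm x)\<^sup>2" using h by blast
      thus "(vnorm x)\<^sup>2 \<le> -1 * Re (ip (app A x) x) + (1 + c) * (vnorm x)\<^sup>2" by (simp add: algebra_simps)
    qed simp
    thus ?thesis by (intro exI[of _ "-1"] exI[of _ "1 + c"]) simp
  qed
qed

lemma rel_compact_affop:
  assumes op: "is_operator A" and s: "s \<noteq> 0" and rc: "rel_compact U A"
  shows "rel_compact U (affop s c A)"
  unfolding rel_compact_def
proof (intro conjI allI impI)
  show "opdom (affop s c A) \<subseteq> opdom U" using rc by (simp add: rel_compact_def)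
  fix x assume h: "(\<forall>n. x n \<in> opdom (affop s c A)) \<and> bounded_seq x \<and> bounded_seq (\<lambda>n. app (affop s c A) (x n))"
  have xd: "\<And>n. x n \<in> opdom A" using h by simp
  obtain M1 where M1: "\<And>n. vnorm (x n) \<le> M1" using h unfolding bounded_seq_def by blast
  obtain M2 where M2: "\<And>n. vnorm (app (affop s c A) (x n)) \<le> M2" using h unfolding bounded_seq_def by blast
  have "bounded_seq (\<lambda>n. app A (x n))"
    unfolding bounded_seq_def
  proof (intro exI allI)
    fix n
    have l: "x n \<in> l2" "app A (x n) \<in> l2" using op xd by (simp_all add: op_dom_l2 op_app_l2)
    have eq: "app A (x n) = smul (complex_of_real (1 / s)) (vsub (app (affop s c A) (x n)) (smul (complex_of_real c) (x n)))"
      using s by (simp add: vadd_def vsub_def smul_def fun_eq_iff field_simps)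
    have "vnorm (vsub (app (affop s c A) (x n)) (smul (complex_of_real c) (x n))) \<le> M2 + \<bar>c\<bar> * M1"
    proof -
      have "vnorm (vsub (app (affop s c A) (x n)) (smul (complex_of_real c) (x n)))
          \<le> vnorm (app (affop s c A) (x n)) + vnorm (smul (-1) (smul (complex_of_real c) (x n)))"
        unfolding vsub_eq using l by (intro vnorm_triangle) simp_all
      also have "vnorm (smul (-1) (smul (complex_of_real c) (x n))) = \<bar>c\<bar> * vnorm (x n)"
        using l by (simp add: vnorm_smul)
      also have "\<bar>c\<bar> * vnorm (x n) \<le> \<bar>c\<bar> * M1" using M1[of n] by (simp add: mult_left_mono)
      finally show ?thesis using M2[of n] by simp
    qed
    hence "(1 / \<bar>s\<bar>) * vnorm (vsub (app (affop s c A) (x n)) (smul (complex_of_real c) (x n))) \<le> (1 / \<bar>s\<bar>) * (M2 + \<bar>c\<bar> * M1)"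
      by (intro mult_left_mono) simp_all
    thus "vnorm (app A (x n)) \<le> (1 / \<bar>s\<bar>) * (M2 + \<bar>c\<bar> * M1)"
      unfolding eq using l by (simp add: vnorm_smul)
  qed
  thus "has_conv_subseq (\<lambda>n. app U (x n))" using rc xd h by (simp add: rel_compact_def)
qed

lemma G1:
  assumes A: "selfadjoint_op A" and sb: "semibounded A" and U: "symmetric_op U" and rc: "rel_compact U A"
    and x: "\<And>n. x n \<in> opdom A" and nx: "\<And>n. vnorm (x n) = 1" and wk: "weak_to_zero x"
    and K: "\<And>n. \<bar>Re (ip (app A (x n)) (x n))\<bar> \<le> K"
  shows "(\<lambda>n. ip (app U (x n)) (x n)) \<longlonglongrightarrow> 0"
proof -
  obtain s c where s: "\<bar>s\<bar> = 1" and p: "posop (affop s c A)" using normalize_semibounded[OF A sb] by blast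
  have op: "is_operator A" using sa_op[OF A] .
  have rc': "rel_compact U (affop s c A)" using rel_compact_affop[OF op _ rc] s by auto
  show ?thesis
  proof (rule form_compact[OF p U rc'])
    show "\<And>n. x n \<in> opdom (affop s c A)" using x by simp
    show "\<And>n. vnorm (x n) \<le> 1" using nx by simp
    show "weak_to_zero x" by (rule wk)
    fix n
    have "Re (ip (app (affop s c A) (x n)) (x n)) = s * Re (ip (app A (x n)) (x n)) + c"
      using re_affop[OF op x, of s c n] nx[of n] by simp
    also have "s * Re (ip (app A (x n)) (x n)) \<le> K"
    proof -
      have "s * Re (ip (app A (x n)) (x n)) \<le> \<bar>s * Re (ip (app A (x n)) (x n))\<bar>" by simp
      also have "\<dots> = \<bar>Re (ip (app A (x n)) (x n))\<bar>" using s by (simp add: abs_mult)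
      finally show ?thesis using K[of n] by simp
    qed
    finally show "Re (ip (app (affop s c A) (x n)) (x n)) \<le> K + c" by simp
  qed
qed

lemma Gb:
  assumes A: "selfadjoint_op A" and sb: "semibounded A" and U: "symmetric_op U" and rc: "rel_compact U A"
    and x: "\<And>n. x n \<in> opdom A" and nx: "\<And>n. vnorm (x n) = 1"
    and K: "\<And>n. \<bar>Re (ip (app A (x n)) (x n)) + Re (ip (app U (x n)) (x n))\<bar> \<le> K"
  shows "\<exists>K'. \<forall>n. \<bar>Re (ip (app A (x n)) (x n))\<bar> \<le> K'"
proof -
  obtain s c where s: "\<bar>s\<bar> = 1" and p: "posop (affop s c A)" using normalize_semibounded[OF A sb] by blast
  have op: "is_operator A" using sa_op[OF A] .
  have rc': "rel_compact U (affop s c A)" using rel_compact_affop[OF op _ rc] s by auto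
  obtain D where D: "\<forall>y\<in>opdom (affop s c A). cmod (ip (app U y) y) \<le> 1/2 * Re (ip (app (affop s c A) y) y) + D * (vnorm y)\<^sup>2"
    using form_bound[OF p U rc', of "1/2"] by auto
  show ?thesis
  proof (intro exI allI)
    fix n
    define a where "a = Re (ip (app A (x n)) (x n))"
    define u where "u = Re (ip (app U (x n)) (x n))"
    have h0: "cmod (ip (app U (x n)) (x n)) \<le> 1/2 * Re (ip (app (affop s c A) (x n)) (x n)) + D * (vnorm (x n))\<^sup>2"
      using bspec[OF D, of "x n"] x[of n] by (simp del: app_affop)
    have h1: "cmod (ip (app U (x n)) (x n)) \<le> 1/2 * (s * a + c) + D"
      using h0 re_affop[OF op x, of s c n] nx[of n] by (simp add: a_def del: app_affop)
    have h2: "\<bar>u\<bar> \<le> cmod (ip (app U (x n)) (x n))" unfolding u_def by (rule abs_Re_le_cmod)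
    have h3: "s * a \<le> \<bar>a + u\<bar> + \<bar>u\<bar>"
    proof -
      have "s * a \<le> \<bar>s * a\<bar>" by simp
      also have "\<dots> = \<bar>a\<bar>" using s by (simp add: abs_mult)
      finally show ?thesis by linarith
    qed
    have h4: "\<bar>a + u\<bar> \<le> K" using K[of n] by (simp add: a_def u_def)
    define q where "q = s * a"
    define m where "m = cmod (ip (app U (x n)) (x n))"
    have g1: "2 * m \<le> q + c + 2 * D" using h1 unfolding q_def[symmetric] m_def[symmetric] by (simp add: field_simps)
    have g3: "q \<le> \<bar>a + u\<bar> + \<bar>u\<bar>" using h3 unfolding q_def .
    have "\<bar>u\<bar> \<le> K + c + 2 * D" using g1 h2 g3 h4 unfolding m_def[symmetric] by linarith
    thus "\<bar>Re (ip (app A (x n)) (x n))\<bar> \<le> 2 * K + c + 2 * D" using h4 unfolding a_def[symmetric] by linarith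
  qed
qed




lemma opdom_re_im[simp]: "opdom (op_re_im A B) = opdom A \<inter> opdom B"
  by (simp add: op_re_im_def opdom_def)
lemma app_re_im[simp]: "app (op_re_im A B) x = vadd (app A x) (smul \<i> (app B x))"
  by (simp add: op_re_im_def app_def)
lemma opdom_plus[simp]: "opdom (op_plus T S) = opdom T \<inter> opdom S"
  by (simp add: op_plus_def opdom_def)
lemma app_plus[simp]: "app (op_plus T S) x = vadd (app T x) (app S x)"
  by (simp add: op_plus_def app_def)

lemma ip_re_im:
  assumes A: "symmetric_op A" and B: "symmetric_op B" and xa: "x \<in> opdom A" and xb: "x \<in> opdom B"
  shows "ip (app (op_re_im A B) x) x = ip (app A x) x + \<i> * ip (app B x) x"
proof -
  have l: "x \<in> l2" "app A x \<in> l2" "app B x \<in> l2"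
    using sym_op[OF A] sym_op[OF B] xa xb by (simp_all add: op_dom_l2 op_app_l2)
  thus ?thesis by (simp add: ip_add_left ip_smul_left)
qed

lemma re_im_l2:
  assumes A: "symmetric_op A" and B: "symmetric_op B" and xa: "x \<in> opdom A" and xb: "x \<in> opdom B"
  shows "app (op_re_im A B) x \<in> l2"
  using sym_op[OF A] sym_op[OF B] xa xb by (simp add: op_app_l2)

lemma Re_Im_re_im:
  assumes A: "symmetric_op A" and B: "symmetric_op B" and xa: "x \<in> opdom A" and xb: "x \<in> opdom B"
  shows "Re (ip (app (op_re_im A B) x) x) = Re (ip (app A x) x)"
    and "Im (ip (app (op_re_im A B) x) x) = Re (ip (app B x) x)"
proof -
  have e: "ip (app (op_re_im A B) x) x = complex_of_real (Re (ip (app A x) x)) + \<i> * complex_of_real (Re (ip (app B x) x))"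
    using ip_re_im[OF A B xa xb] sym_real[OF A xa] sym_real[OF B xb] by simp
  show "Re (ip (app (op_re_im A B) x) x) = Re (ip (app A x) x)" unfolding e by simp
  show "Im (ip (app (op_re_im A B) x) x) = Re (ip (app B x) x)" unfolding e by simp
qed

theorem theorem4p5:
  fixes A B U V :: op
  assumes "symmetric_op A" and "symmetric_op B" and "symmetric_op U" and "symmetric_op V"
    and "(selfadjoint_op A \<and> semibounded A \<and> rel_compact U A \<and> rel_compact V A)
       \<or> (selfadjoint_op B \<and> semibounded B \<and> rel_compact U B \<and> rel_compact V B)
       \<or> (selfadjoint_op A \<and> semibounded A \<and> selfadjoint_op B \<and> semibounded B
            \<and> rel_compact U A \<and> rel_compact V B)"
  shows "ess_num_range (op_re_im A B) = ess_num_range (op_plus (op_re_im A B) (op_re_im U V))"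
proof -
  note A = assms(1) and B = assms(2) and U = assms(3) and V = assms(4) and cases = assms(5)
  define T where "T = op_re_im A B"
  define S where "S = op_re_im U V"
  have dS: "x \<in> opdom U \<and> x \<in> opdom V" if "x \<in> opdom A" "x \<in> opdom B" for x
    using cases that by (auto simp: rel_compact_def)
  have ipTS: "ip (app (op_plus T S) x) x = ip (app T x) x + ip (app S x) x"
    if xa: "x \<in> opdom A" and xb: "x \<in> opdom B" for x
  proof -
    have xu: "x \<in> opdom U" "x \<in> opdom V" using dS[OF xa xb] by auto
    have l: "x \<in> l2" using sym_op[OF A] xa by (simp add: op_dom_l2)
    show ?thesis unfolding T_def S_def
      using re_im_l2[OF A B xa xb] re_im_l2[OF U V xu] l by (simp add: ip_add_left)
  qed
  have ReTS: "Re (ip (app (op_plus T S) x) x) = Re (ip (app A x) x) + Re (ip (app U x) x)"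
    and ImTS: "Im (ip (app (op_plus T S) x) x) = Re (ip (app B x) x) + Re (ip (app V x) x)"
    if xa: "x \<in> opdom A" and xb: "x \<in> opdom B" for x
  proof -
    have xu: "x \<in> opdom U" "x \<in> opdom V" using dS[OF xa xb] by auto
    show "Re (ip (app (op_plus T S) x) x) = Re (ip (app A x) x) + Re (ip (app U x) x)"
      unfolding ipTS[OF xa xb] unfolding T_def S_def using Re_Im_re_im[OF A B xa xb] Re_Im_re_im[OF U V xu] by (simp del: app_re_im)
    show "Im (ip (app (op_plus T S) x) x) = Re (ip (app B x) x) + Re (ip (app V x) x)"
      unfolding ipTS[OF xa xb] unfolding T_def S_def using Re_Im_re_im[OF A B xa xb] Re_Im_re_im[OF U V xu] by (simp del: app_re_im)
  qed
  have key: "(\<lambda>n. ip (app S (x n)) (x n)) \<longlonglongrightarrow> 0"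
    if x: "\<And>n. x n \<in> opdom A \<and> x n \<in> opdom B" and nx: "\<And>n. vnorm (x n) = 1" and wk: "weak_to_zero x"
      and H: "(\<exists>K. \<forall>n. \<bar>Re (ip (app A (x n)) (x n))\<bar> \<le> K \<and> \<bar>Re (ip (app B (x n)) (x n))\<bar> \<le> K) \<or>
              (\<exists>K. \<forall>n. \<bar>Re (ip (app A (x n)) (x n)) + Re (ip (app U (x n)) (x n))\<bar> \<le> K \<and>
                        \<bar>Re (ip (app B (x n)) (x n)) + Re (ip (app V (x n)) (x n))\<bar> \<le> K)"
    for x
  proof -
    have xa: "\<And>n. x n \<in> opdom A" and xb: "\<And>n. x n \<in> opdom B" using x by auto
    have xu: "\<And>n. x n \<in> opdom U" and xv: "\<And>n. x n \<in> opdom V" using dS[OF xa xb] by auto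
    have bA: "\<exists>K. \<forall>n. \<bar>Re (ip (app A (x n)) (x n))\<bar> \<le> K"
      if sa: "selfadjoint_op A" and sb: "semibounded A" and rc: "rel_compact U A"
      using H
    proof
      assume "\<exists>K. \<forall>n. \<bar>Re (ip (app A (x n)) (x n))\<bar> \<le> K \<and> \<bar>Re (ip (app B (x n)) (x n))\<bar> \<le> K"
      thus ?thesis by blast
    next
      assume "\<exists>K. \<forall>n. \<bar>Re (ip (app A (x n)) (x n)) + Re (ip (app U (x n)) (x n))\<bar> \<le> K \<and>
                        \<bar>Re (ip (app B (x n)) (x n)) + Re (ip (app V (x n)) (x n))\<bar> \<le> K"
      then obtain K where K: "\<And>n. \<bar>Re (ip (app A (x n)) (x n)) + Re (ip (app U (x n)) (x n))\<bar> \<le> K" by blast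
      show ?thesis by (rule Gb[OF sa sb U rc xa nx K])
    qed
    have bB: "\<exists>K. \<forall>n. \<bar>Re (ip (app B (x n)) (x n))\<bar> \<le> K"
      if sa: "selfadjoint_op B" and sb: "semibounded B" and rc: "rel_compact V B"
      using H
    proof
      assume "\<exists>K. \<forall>n. \<bar>Re (ip (app A (x n)) (x n))\<bar> \<le> K \<and> \<bar>Re (ip (app B (x n)) (x n))\<bar> \<le> K"
      thus ?thesis by blast
    next
      assume "\<exists>K. \<forall>n. \<bar>Re (ip (app A (x n)) (x n)) + Re (ip (app U (x n)) (x n))\<bar> \<le> K \<and>
                        \<bar>Re (ip (app B (x n)) (x n)) + Re (ip (app V (x n)) (x n))\<bar> \<le> K"
      then obtain K where K: "\<And>n. \<bar>Re (ip (app B (x n)) (x n)) + Re (ip (app V (x n)) (x n))\<bar> \<le> K" by blast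
      show ?thesis by (rule Gb[OF sa sb V rc xb nx K])
    qed
    have conv: "(\<lambda>n. ip (app U (x n)) (x n)) \<longlonglongrightarrow> 0 \<and> (\<lambda>n. ip (app V (x n)) (x n)) \<longlonglongrightarrow> 0"
    proof -
      { assume c: "selfadjoint_op A \<and> semibounded A \<and> rel_compact U A \<and> rel_compact V A"
        then obtain K where K: "\<And>n. \<bar>Re (ip (app A (x n)) (x n))\<bar> \<le> K" using bA by blast
        have ?thesis using G1[OF _ _ U _ xa nx wk K] G1[OF _ _ V _ xa nx wk K] c by blast }
      moreover
      { assume c: "selfadjoint_op B \<and> semibounded B \<and> rel_compact U B \<and> rel_compact V B"
        then obtain K where K: "\<And>n. \<bar>Re (ip (app B (x n)) (x n))\<bar> \<le> K" using bB by blast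
        have ?thesis using G1[OF _ _ U _ xb nx wk K] G1[OF _ _ V _ xb nx wk K] c by blast }
      moreover
      { assume c: "selfadjoint_op A \<and> semibounded A \<and> selfadjoint_op B \<and> semibounded B
            \<and> rel_compact U A \<and> rel_compact V B"
        then obtain K where K: "\<And>n. \<bar>Re (ip (app A (x n)) (x n))\<bar> \<le> K" using bA by blast
        obtain K' where K': "\<And>n. \<bar>Re (ip (app B (x n)) (x n))\<bar> \<le> K'" using bB c by blast
        have ?thesis using G1[OF _ _ U _ xa nx wk K] G1[OF _ _ V _ xb nx wk K'] c by blast }
      ultimately show ?thesis using cases by blast
    qed
    have "(\<lambda>n. ip (app U (x n)) (x n) + \<i> * ip (app V (x n)) (x n)) \<longlonglongrightarrow> 0 + \<i> * 0"
      using conv by (intro tendsto_intros) auto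
    moreover have "ip (app S (x n)) (x n) = ip (app U (x n)) (x n) + \<i> * ip (app V (x n)) (x n)" for n
      unfolding S_def by (rule ip_re_im[OF U V xu xv])
    ultimately show ?thesis by simp
  qed
  have bnd: "\<exists>K. \<forall>n. \<bar>Re (f n)\<bar> \<le> K \<and> \<bar>Im (f n)\<bar> \<le> K" if "f \<longlonglongrightarrow> l" for f :: "nat \<Rightarrow> complex" and l
  proof -
    have "Bseq f" using that by (rule convergent_imp_Bseq[OF convergentI])
    then obtain K where "\<forall>n. norm (f n) \<le> K" unfolding Bseq_def by blast
    thus ?thesis using abs_Re_le_cmod abs_Im_le_cmod order_trans by metis
  qed
  show ?thesis unfolding T_def[symmetric] S_def[symmetric]
  proof
    show "ess_num_range T \<subseteq> ess_num_range (op_plus T S)"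
    proof
      fix l assume "l \<in> ess_num_range T"
      then obtain x where x: "\<And>n. x n \<in> opdom T" and nx: "\<And>n. vnorm (x n) = 1" and wk: "weak_to_zero x"
        and cv: "(\<lambda>n. ip (app T (x n)) (x n)) \<longlonglongrightarrow> l"
        unfolding ess_num_range_def by blast
      have xab: "\<And>n. x n \<in> opdom A \<and> x n \<in> opdom B" using x by (simp add: T_def)
      obtain K where K: "\<forall>n. \<bar>Re (ip (app T (x n)) (x n))\<bar> \<le> K \<and> \<bar>Im (ip (app T (x n)) (x n))\<bar> \<le> K"
        using bnd[OF cv] by blast
      have "\<forall>n. \<bar>Re (ip (app A (x n)) (x n))\<bar> \<le> K \<and> \<bar>Re (ip (app B (x n)) (x n))\<bar> \<le> K"
        using K xab Re_Im_re_im[OF A B] by (simp add: T_def)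
      hence S0: "(\<lambda>n. ip (app S (x n)) (x n)) \<longlonglongrightarrow> 0" using key[OF xab nx wk] by blast
      have "(\<lambda>n. ip (app T (x n)) (x n) + ip (app S (x n)) (x n)) \<longlonglongrightarrow> l + 0"
        by (intro tendsto_add cv S0)
      hence cv2: "(\<lambda>n. ip (app (op_plus T S) (x n)) (x n)) \<longlonglongrightarrow> l"
        using ipTS xab by simp
      have "\<forall>n. x n \<in> opdom (op_plus T S) \<and> vnorm (x n) = 1"
        using xab dS nx by (simp add: T_def S_def)
      thus "l \<in> ess_num_range (op_plus T S)" unfolding ess_num_range_def using wk cv2 by blast
    qed
    show "ess_num_range (op_plus T S) \<subseteq> ess_num_range T"
    proof
      fix l assume "l \<in> ess_num_range (op_plus T S)"
      then obtain x where x: "\<And>n. x n \<in> opdom (op_plus T S)" and nx: "\<And>n. vnorm (x n) = 1" and wk: "weak_to_zero x"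
        and cv: "(\<lambda>n. ip (app (op_plus T S) (x n)) (x n)) \<longlonglongrightarrow> l"
        unfolding ess_num_range_def by blast
      have xab: "\<And>n. x n \<in> opdom A \<and> x n \<in> opdom B" using x by (simp add: T_def)
      obtain K where K: "\<forall>n. \<bar>Re (ip (app (op_plus T S) (x n)) (x n))\<bar> \<le> K \<and> \<bar>Im (ip (app (op_plus T S) (x n)) (x n))\<bar> \<le> K"
        using bnd[OF cv] by blast
      have "\<forall>n. \<bar>Re (ip (app A (x n)) (x n)) + Re (ip (app U (x n)) (x n))\<bar> \<le> K \<and>
                \<bar>Re (ip (app B (x n)) (x n)) + Re (ip (app V (x n)) (x n))\<bar> \<le> K"
        using K xab ReTS ImTS by simp
      hence S0: "(\<lambda>n. ip (app S (x n)) (x n)) \<longlonglongrightarrow> 0" using key[OF xab nx wk] by blast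
      have "(\<lambda>n. ip (app (op_plus T S) (x n)) (x n) - ip (app S (x n)) (x n)) \<longlonglongrightarrow> l - 0"
        by (intro tendsto_diff cv S0)
      hence cv2: "(\<lambda>n. ip (app T (x n)) (x n)) \<longlonglongrightarrow> l"
        using ipTS xab by simp
      have "\<forall>n. x n \<in> opdom T \<and> vnorm (x n) = 1"
        using xab nx by (simp add: T_def)
      thus "l \<in> ess_num_range T" unfolding ess_num_range_def using wk cv2 by blast
    qed
  qed
qed



end
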